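(* Let $\mathbf{\mathsf{P}SymmH}$ be the groupoid whose objects are complex Hilbert spaces of dimension greater than $2$, and whose morphisms $\mathcal{H}\to\mathcal{K}$ are equivalence classes $[U]$ of semiunitary maps $U:\mathcal{H}\to\mathcal{K}$ under the relation $U\sim V \iff U=\lambda V$ for some $\lambda\in\mathbb{C}$ with $|\lambda|=1$. Let $\mathbf{bmChu}$ be the category whose objects are biextensional Chu spaces over $[0,1]$ and whose morphisms are Chu morphisms $(f_*,f^* )$ with $f_*$ injective. Define $\mathsf{P}R:\mathbf{\mathsf{P}SymmH}\to\mathbf{bmChu}$ on objects by $\mathcal{H}\mapsto(\mathsf{P}(\mathcal{H}),\mathsf{L}(\mathcal{H}),\bar e_{\mathcal{H}})$ and on morphisms by $[U]\mapsto(\mathsf{P}(U),\,U^{-1})$, where $\mathsf{P}(U)([\psi])=[U\psi]$ and $U^{-1}$ sends a closed subspace $S$ of $\mathcal{K}$ to its inverse image $U^{-1}(S)$. Then $\mathsf{P}R$ is a well-defined functor which is full and faithful.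
   Context: A Chu space over a set $K$ is a triple $(X,A,e)$ with $e:X\times A\to K$. A Chu morphism $(X,A,e)\to(X',A',e')$ is a pair $(f_*:X\to X',\,f^*:A'\to A)$ with $e(x,f^*(a'))=e'(f_*(x),a')$ for all $x\in X,a'\in A'$; composition is $(g\circ f)_*=g_*\circ f_*$, $(g\circ f)^*=f^*\circ g^*$. The space is extensional if $e(x,a_1)=e(x,a_2)$ for all $x$ implies $a_1=a_2$; separated if $e(x_1,a)=e(x_2,a)$ for all $a$ implies $x_1=x_2$; biextensional if both. For a complex Hilbert space $\mathcal{H}$: $\mathsf{L}(\mathcal{H})$ is the set of closed subspaces, $P_S$ the orthogonal projector onto $S$, $\mathsf{P}(\mathcal{H})$ the set of rays $[\psi]=\{\lambda\psi:\lambda\in\mathbb{C}\}$ for $\psi\neq 0$, and $\bar e_{\mathcal{H}}([\psi],S)=\|P_S\psi\|^2/\|\psi\|^2$. A map $U:\mathcal{H}\to\mathcal{K}$ is semiunitary if it is a bijection with $U(\phi+\psi)=U\phi+U\psi$, $U(\lambda\phi)=\sigma(\lambda)U\phi$, $\langle U\phi,U\psi\rangle=\sigma(\langle\phi,\psi\rangle)$, where $\sigma$ is either the identity or complex conjugation (i.e. $U$ is unitary or antiunitary). A functor is full (faithful) if its action on each hom-set is surjective (injective). *)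

theory Defs
  imports Complex_Main
begin

text \<open>A complex Hilbert space: a complete (real) normed space carrying a complex
scalar multiplication extending the real one and a complex inner product
(conjugate-linear in the first, linear in the second argument) inducing the norm.\<close>

class chilbert = banach +
  fixes hscale :: "complex \<Rightarrow> 'a \<Rightarrow> 'a"
    and hinner :: "'a \<Rightarrow> 'a \<Rightarrow> complex"
  assumes hscale_add_right: "hscale c (x + y) = hscale c x + hscale c y"
    and hscale_add_left: "hscale (c + d) x = hscale c x + hscale d x"
    and hscale_hscale: "hscale c (hscale d x) = hscale (c * d) x"
    and hscale_one: "hscale 1 x = x"
    and scaleR_hscale: "scaleR r x = hscale (complex_of_real r) x"
    and hinner_add_right: "hinner x (y + z) = hinner x y + hinner x z"
    and hinner_hscale_right: "hinner x (hscale c y) = c * hinner x y"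
    and hinner_commute: "hinner y x = cnj (hinner x y)"
    and hinner_norm: "hinner x x = complex_of_real ((norm x)\<^sup>2)"

definition dim_gt2 :: "'a::chilbert itself \<Rightarrow> bool" where
  "dim_gt2 _ \<longleftrightarrow> (\<exists>x y z :: 'a. \<forall>a b c.
      hscale a x + hscale b y + hscale c z = 0 \<longrightarrow> a = 0 \<and> b = 0 \<and> c = 0)"

definition Lsub :: "'a::chilbert set set" where
  "Lsub = {S. closed S \<and> 0 \<in> S \<and> (\<forall>x\<in>S. \<forall>y\<in>S. x + y \<in> S)
               \<and> (\<forall>c. \<forall>x\<in>S. hscale c x \<in> S)}"

definition proj :: "'a::chilbert set \<Rightarrow> 'a \<Rightarrow> 'a" where
  "proj S \<psi> = (THE p. p \<in> S \<and> (\<forall>s\<in>S. hinner s (\<psi> - p) = 0))"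

definition ray :: "'a::chilbert \<Rightarrow> 'a set" where
  "ray \<psi> = {hscale l \<psi> | l. True}"

definition rays :: "'a::chilbert set set" where
  "rays = {ray \<psi> | \<psi>. \<psi> \<noteq> 0}"

definition rep :: "'a::chilbert set \<Rightarrow> 'a" where
  "rep r = (SOME \<psi>. \<psi> \<noteq> 0 \<and> r = ray \<psi>)"

definition ebar :: "'a::chilbert set \<Rightarrow> 'a set \<Rightarrow> real" where
  "ebar r S = (norm (proj S (rep r)))\<^sup>2 / (norm (rep r))\<^sup>2"

definition semiunitary :: "('a::chilbert \<Rightarrow> 'b::chilbert) \<Rightarrow> bool" where
  "semiunitary U \<longleftrightarrow> bij U \<and> (\<forall>x y. U (x + y) = U x + U y) \<and>
     (\<exists>\<sigma> \<in> {id, cnj}. (\<forall>l x. U (hscale l x) = hscale (\<sigma> l) (U x)) \<and>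
                      (\<forall>x y. hinner (U x) (U y) = \<sigma> (hinner x y)))"

definition su_equiv :: "('a::chilbert \<Rightarrow> 'b::chilbert) \<Rightarrow> ('a \<Rightarrow> 'b) \<Rightarrow> bool" where
  "su_equiv U V \<longleftrightarrow> (\<exists>l. cmod l = 1 \<and> (\<forall>x. U x = hscale l (V x)))"

definition PU :: "('a::chilbert \<Rightarrow> 'b::chilbert) \<Rightarrow> 'a set \<Rightarrow> 'b set" where
  "PU U r = ray (U (rep r))"

definition chu_space01 :: "'x set \<Rightarrow> 'a set \<Rightarrow> ('x \<Rightarrow> 'a \<Rightarrow> real) \<Rightarrow> bool" where
  "chu_space01 X A e \<longleftrightarrow> (\<forall>x\<in>X. \<forall>a\<in>A. e x a \<in> {0..1})"

definition extensional_chu :: "'x set \<Rightarrow> 'a set \<Rightarrow> ('x \<Rightarrow> 'a \<Rightarrow> 'k) \<Rightarrow> bool" where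
  "extensional_chu X A e \<longleftrightarrow>
     (\<forall>a1\<in>A. \<forall>a2\<in>A. (\<forall>x\<in>X. e x a1 = e x a2) \<longrightarrow> a1 = a2)"

definition separated_chu :: "'x set \<Rightarrow> 'a set \<Rightarrow> ('x \<Rightarrow> 'a \<Rightarrow> 'k) \<Rightarrow> bool" where
  "separated_chu X A e \<longleftrightarrow>
     (\<forall>x1\<in>X. \<forall>x2\<in>X. (\<forall>a\<in>A. e x1 a = e x2 a) \<longrightarrow> x1 = x2)"

definition biextensional_chu :: "'x set \<Rightarrow> 'a set \<Rightarrow> ('x \<Rightarrow> 'a \<Rightarrow> 'k) \<Rightarrow> bool" where
  "biextensional_chu X A e \<longleftrightarrow> extensional_chu X A e \<and> separated_chu X A e"

definition chu_morph ::
  "'x set \<Rightarrow> 'a set \<Rightarrow> ('x \<Rightarrow> 'a \<Rightarrow> 'k) \<Rightarrow> 'y set \<Rightarrow> 'b set \<Rightarrow> ('y \<Rightarrow> 'b \<Rightarrow> 'k)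
     \<Rightarrow> ('x \<Rightarrow> 'y) \<Rightarrow> ('b \<Rightarrow> 'a) \<Rightarrow> bool" where
  "chu_morph X A e X' A' e' fs fu \<longleftrightarrow>
     (\<forall>x\<in>X. fs x \<in> X') \<and> (\<forall>a'\<in>A'. fu a' \<in> A) \<and>
     (\<forall>x\<in>X. \<forall>a'\<in>A'. e x (fu a') = e' (fs x) a')"

definition bm_morph ::
  "'x set \<Rightarrow> 'a set \<Rightarrow> ('x \<Rightarrow> 'a \<Rightarrow> 'k) \<Rightarrow> 'y set \<Rightarrow> 'b set \<Rightarrow> ('y \<Rightarrow> 'b \<Rightarrow> 'k)
     \<Rightarrow> ('x \<Rightarrow> 'y) \<Rightarrow> ('b \<Rightarrow> 'a) \<Rightarrow> bool" where
  "bm_morph X A e X' A' e' fs fu \<longleftrightarrow> chu_morph X A e X' A' e' fs fu \<and> inj_on fs X"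

definition chu_eq :: "'x set \<Rightarrow> 'b set \<Rightarrow> ('x \<Rightarrow> 'y) \<Rightarrow> ('b \<Rightarrow> 'a) \<Rightarrow> ('x \<Rightarrow> 'y) \<Rightarrow> ('b \<Rightarrow> 'a) \<Rightarrow> bool" where
  "chu_eq X A' fs fu gs gu \<longleftrightarrow> (\<forall>x\<in>X. fs x = gs x) \<and> (\<forall>a\<in>A'. fu a = gu a)"

end

theory Submission
  imports Defs
begin


lemma hscale_zero_left[simp]: "hscale 0 (x::'a::chilbert) = 0"
proof -
  have "hscale (0+0) x = hscale 0 x + hscale 0 x" by (rule hscale_add_left)
  then show ?thesis by simp
qed

lemma hscale_zero_right[simp]: "hscale c (0::'a::chilbert) = 0"
proof -
  have "hscale c (0+0::'a) = hscale c 0 + hscale c 0" by (rule hscale_add_right)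
  then show ?thesis by simp
qed

lemma hscale_minus_right: "hscale c (- x::'a::chilbert) = - hscale c x"
proof -
  have "hscale c (- x + x) = hscale c (-x) + hscale c x" by (rule hscale_add_right)
  then show ?thesis by (simp add: eq_neg_iff_add_eq_0)
qed

lemma hscale_minus_left: "hscale (- c) (x::'a::chilbert) = - hscale c x"
proof -
  have "hscale (- c + c) x = hscale (-c) x + hscale c x" by (rule hscale_add_left)
  then show ?thesis by (simp add: eq_neg_iff_add_eq_0)
qed

lemma hscale_diff_right: "hscale c (x - y::'a::chilbert) = hscale c x - hscale c y"
proof -
  have "hscale c ((x - y) + y) = hscale c (x - y) + hscale c y" by (rule hscale_add_right)
  then show ?thesis by (simp add: eq_diff_eq)
qed

lemma hscale_diff_left: "hscale (c - d) (x::'a::chilbert) = hscale c x - hscale d x"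
proof -
  have "hscale ((c - d) + d) x = hscale (c - d) x + hscale d x" by (rule hscale_add_left)
  then show ?thesis by (simp add: eq_diff_eq)
qed

lemma hscale_of_real: "hscale (complex_of_real r) (x::'a::chilbert) = scaleR r x"
  by (simp add: scaleR_hscale)

lemma minus_hscale: "- (x::'a::chilbert) = hscale (-1) x"
  by (simp add: hscale_minus_left hscale_one)

lemma hinner_zero_right[simp]: "hinner (x::'a::chilbert) 0 = 0"
proof -
  have "hinner x (0+0) = hinner x 0 + hinner x 0" by (rule hinner_add_right)
  then show ?thesis by simp
qed

lemma hinner_zero_left[simp]: "hinner 0 (x::'a::chilbert) = 0"
  by (metis hinner_commute hinner_zero_right complex_cnj_zero)

lemma hinner_add_left: "hinner (x + y) (z::'a::chilbert) = hinner x z + hinner y z"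
  by (metis hinner_commute hinner_add_right complex_cnj_add)

lemma hinner_hscale_left: "hinner (hscale c x) (y::'a::chilbert) = cnj c * hinner x y"
  by (metis hinner_commute hinner_hscale_right complex_cnj_mult complex_cnj_cnj)

lemma hinner_minus_right: "hinner x (- y::'a::chilbert) = - hinner x y"
proof -
  have "hinner x (- y + y) = hinner x (-y) + hinner x y" by (rule hinner_add_right)
  then show ?thesis by (simp add: eq_neg_iff_add_eq_0)
qed

lemma hinner_minus_left: "hinner (- x) (y::'a::chilbert) = - hinner x y"
proof -
  have "hinner (- x + x) y = hinner (-x) y + hinner x y" by (rule hinner_add_left)
  then show ?thesis by (simp add: eq_neg_iff_add_eq_0)
qed

lemma hinner_diff_right: "hinner x (y - z::'a::chilbert) = hinner x y - hinner x z"
proof -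
  have "hinner x ((y - z) + z) = hinner x (y - z) + hinner x z" by (rule hinner_add_right)
  then show ?thesis by (simp add: eq_diff_eq)
qed

lemma hinner_diff_left: "hinner (x - y) (z::'a::chilbert) = hinner x z - hinner y z"
proof -
  have "hinner ((x - y) + y) z = hinner (x - y) z + hinner y z" by (rule hinner_add_left)
  then show ?thesis by (simp add: eq_diff_eq)
qed

lemmas hinner_simps = hinner_add_left hinner_add_right hinner_diff_left hinner_diff_right
  hinner_minus_left hinner_minus_right hinner_hscale_left hinner_hscale_right

lemma hinner_self_eq_zero[simp]: "hinner x x = 0 \<longleftrightarrow> (x::'a::chilbert) = 0"
  by (simp add: hinner_norm)

lemma norm_sq_Re: "(norm (x::'a::chilbert))\<^sup>2 = Re (hinner x x)"
  by (simp add: hinner_norm)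

lemma Re_hinner_commute: "Re (hinner y x) = Re (hinner x (y::'a::chilbert))"
  by (subst hinner_commute) simp

lemma cmod_hinner_commute: "cmod (hinner y x) = cmod (hinner x (y::'a::chilbert))"
  by (subst hinner_commute) simp

lemma norm_hscale: "norm (hscale c (x::'a::chilbert)) = cmod c * norm x"
proof -
  have "(norm (hscale c x))\<^sup>2 = Re (c * (cnj c * hinner x x))"
    by (simp only: norm_sq_Re hinner_hscale_left hinner_hscale_right)
  also have "\<dots> = (cmod c)\<^sup>2 * (norm x)\<^sup>2"
    by (simp add: hinner_norm mult.assoc[symmetric] complex_norm_square[symmetric] del: of_real_power)
  finally have "(norm (hscale c x))\<^sup>2 = (cmod c * norm x)\<^sup>2" by (simp add: power_mult_distrib)
  then show ?thesis by (simp add: power2_eq_iff_nonneg)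
qed

lemma norm_add_sq: "(norm (x + y))\<^sup>2 = (norm x)\<^sup>2 + (norm y)\<^sup>2 + 2 * Re (hinner x (y::'a::chilbert))"
  by (simp add: norm_sq_Re hinner_simps Re_hinner_commute[of y x])

lemma norm_diff_sq: "(norm (x - y))\<^sup>2 = (norm x)\<^sup>2 + (norm y)\<^sup>2 - 2 * Re (hinner x (y::'a::chilbert))"
  by (simp add: norm_sq_Re hinner_simps Re_hinner_commute[of y x])


lemma cauchy_schwarz_sq:
  fixes x y :: "'a::chilbert"
  assumes "x \<noteq> 0"
  shows "(norm (y - hscale (hinner x y / complex_of_real ((norm x)\<^sup>2)) x))\<^sup>2
     = (norm y)\<^sup>2 - (cmod (hinner x y))\<^sup>2 / (norm x)\<^sup>2"
proof -
  define a where "a = hinner x y"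
  define n where "n = (norm x)\<^sup>2"
  have n: "n > 0" using assms by (simp add: n_def)
  define c where "c = a / complex_of_real n"
  have "(norm (y - hscale c x))\<^sup>2 = (norm y)\<^sup>2 + (cmod c * norm x)\<^sup>2 - 2 * Re (hinner y (hscale c x))"
    by (simp add: norm_diff_sq norm_hscale)
  also have "hinner y (hscale c x) = c * cnj a"
    by (simp add: hinner_hscale_right a_def hinner_commute[of x y])
  also have "c * cnj a = a * cnj a / complex_of_real n" by (simp add: c_def)
  also have "\<dots> = complex_of_real ((cmod a)\<^sup>2) / complex_of_real n"
    by (simp only: complex_norm_square)
  also have "\<dots> = complex_of_real ((cmod a)\<^sup>2 / n)" by simp
  also have "(cmod c * norm x)\<^sup>2 = (cmod a)\<^sup>2 / n"
  proof -
    have cc: "cmod c = cmod a / n" using n by (simp add: c_def norm_divide)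
    have nx2: "(norm x)\<^sup>2 = n" by (simp add: n_def)
    show ?thesis unfolding cc power_mult_distrib nx2 using n
      by (simp add: power2_eq_square field_simps)
  qed
  finally show ?thesis by (simp add: a_def n_def c_def)
qed

lemma cauchy_schwarz:
  fixes x y :: "'a::chilbert"
  shows "cmod (hinner x y) \<le> norm x * norm y"
proof (cases "x = 0")
  case True then show ?thesis by simp
next
  case False
  have nx: "norm x > 0" using False by simp
  from cauchy_schwarz_sq[OF False, of y]
  have "0 \<le> (norm y)\<^sup>2 - (cmod (hinner x y))\<^sup>2 / (norm x)\<^sup>2" by (metis zero_le_power2)
  then have "(cmod (hinner x y))\<^sup>2 \<le> (norm x * norm y)\<^sup>2"
    using nx by (simp add: field_simps power_mult_distrib)
  then show ?thesis by (simp add: power2_le_iff_abs_le)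
qed

lemma cauchy_schwarz_eq:
  fixes x y :: "'a::chilbert"
  assumes "x \<noteq> 0" and "cmod (hinner x y) = norm x * norm y"
  shows "y = hscale (hinner x y / complex_of_real ((norm x)\<^sup>2)) x"
proof -
  have nx: "norm x > 0" using assms by simp
  have "(norm (y - hscale (hinner x y / complex_of_real ((norm x)\<^sup>2)) x))\<^sup>2 = 0"
    using cauchy_schwarz_sq[OF assms(1), of y] assms(2) nx by (simp add: power_mult_distrib)
  then show ?thesis by simp
qed

lemma hinner_eq_cmod:
  fixes x y :: "'a::chilbert"
  assumes "norm x = 1" "norm y = 1" "cmod (hinner x y) = 1"
  shows "\<exists>c. cmod c = 1 \<and> y = hscale c x"
proof -
  have "x \<noteq> 0" using assms by auto
  from cauchy_schwarz_eq[OF this] assms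
  have "y = hscale (hinner x y) x" by simp
  then show ?thesis using assms(3) by blast
qed

lemma bounded_linear_hinner_scale:
  fixes a :: "'a::chilbert" and b :: "'b::chilbert"
  shows "bounded_linear (\<lambda>x. hscale (hinner a x) b)"
proof (rule bounded_linear_intro[where K="norm a * norm b"])
  fix x y show "hscale (hinner a (x + y)) b = hscale (hinner a x) b + hscale (hinner a y) b"
    by (simp add: hinner_add_right hscale_add_left)
next
  fix r x show "hscale (hinner a (scaleR r x)) b = scaleR r (hscale (hinner a x) b)"
    by (simp add: hinner_hscale_right scaleR_hscale hscale_hscale)
next
  fix x show "norm (hscale (hinner a x) b) \<le> norm x * (norm a * norm b)"
    using mult_left_mono[OF cauchy_schwarz[of a x], of "norm b"]
    by (simp add: norm_hscale mult_ac)
qed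

lemma continuous_on_hinner_scale:
  fixes a :: "'a::chilbert" and b :: "'b::chilbert"
  shows "continuous_on UNIV (\<lambda>x. hscale (hinner a x) b)"
proof -
  have "continuous_on UNIV (\<lambda>x. hscale (hinner a ((\<lambda>x. x) x)) b)"
    by (rule bounded_linear.continuous_on[OF bounded_linear_hinner_scale]) (rule continuous_on_id)
  then show ?thesis by simp
qed

lemma Lsub_zero: "S \<in> Lsub \<Longrightarrow> 0 \<in> S" by (simp add: Lsub_def)
lemma Lsub_add: "S \<in> Lsub \<Longrightarrow> x \<in> S \<Longrightarrow> y \<in> S \<Longrightarrow> x + y \<in> S" by (simp add: Lsub_def)
lemma Lsub_hscale: "S \<in> Lsub \<Longrightarrow> x \<in> S \<Longrightarrow> hscale c x \<in> S" by (simp add: Lsub_def)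
lemma Lsub_closed: "S \<in> Lsub \<Longrightarrow> closed S" by (simp add: Lsub_def)
lemma Lsub_minus: "S \<in> Lsub \<Longrightarrow> x \<in> S \<Longrightarrow> - x \<in> S"
  by (metis Lsub_hscale minus_hscale)
lemma Lsub_diff: "S \<in> Lsub \<Longrightarrow> x \<in> S \<Longrightarrow> y \<in> S \<Longrightarrow> x - y \<in> S"
  by (metis Lsub_add Lsub_minus diff_conv_add_uminus)
lemma Lsub_scaleR: "S \<in> Lsub \<Longrightarrow> x \<in> S \<Longrightarrow> scaleR r x \<in> S"
  by (metis Lsub_hscale scaleR_hscale)


lemma parallelogram:
  fixes a b :: "'a::chilbert"
  shows "(norm (a - b))\<^sup>2 + (norm (a + b))\<^sup>2 = 2 * (norm a)\<^sup>2 + 2 * (norm b)\<^sup>2"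
  by (simp add: norm_add_sq norm_diff_sq)

lemma proj_exists:
  fixes S :: "'a::chilbert set"
  assumes S: "S \<in> Lsub"
  shows "\<exists>p\<in>S. \<forall>s\<in>S. hinner s (\<psi> - p) = 0"
proof -
  define d where "d = Inf ((\<lambda>s. norm (\<psi> - s)) ` S)"
  have ne: "(\<lambda>s. norm (\<psi> - s)) ` S \<noteq> {}" using Lsub_zero[OF S] by auto
  have bdd: "bdd_below ((\<lambda>s. norm (\<psi> - s)) ` S)" by (rule bdd_belowI[of _ 0]) auto
  have dle: "d \<le> norm (\<psi> - s)" if "s \<in> S" for s
    unfolding d_def using bdd that by (auto intro: cInf_lower)
  have d0: "0 \<le> d" unfolding d_def using ne by (auto intro: cInf_greatest)
  have "\<exists>s\<in>S. (norm (\<psi> - s))\<^sup>2 < d\<^sup>2 + 1 / real (Suc n)" for n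
  proof -
    have "d < sqrt (d\<^sup>2 + 1 / real (Suc n))"
      using d0 by (metis less_add_same_cancel1 of_nat_0_less_iff real_sqrt_abs real_sqrt_less_iff
          zero_less_Suc zero_less_divide_1_iff abs_of_nonneg)
    then obtain s where s: "s \<in> S" "norm (\<psi> - s) < sqrt (d\<^sup>2 + 1 / real (Suc n))"
      using cInf_lessD[OF ne] unfolding d_def by force
    have "(norm (\<psi> - s))\<^sup>2 < (sqrt (d\<^sup>2 + 1 / real (Suc n)))\<^sup>2"
      using s(2) by (intro power_strict_mono) auto
    also have "\<dots> = d\<^sup>2 + 1 / real (Suc n)" by (intro real_sqrt_pow2) (simp add: add_nonneg_nonneg)
    finally show ?thesis using s(1) by blast
  qed
  then obtain f where f: "\<And>n. f n \<in> S" "\<And>n. (norm (\<psi> - f n))\<^sup>2 < d\<^sup>2 + 1 / real (Suc n)"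
    by metis
  have key: "(norm (s - t))\<^sup>2 \<le> 2 * (norm (\<psi> - s))\<^sup>2 + 2 * (norm (\<psi> - t))\<^sup>2 - 4 * d\<^sup>2"
    if "s \<in> S" "t \<in> S" for s t
  proof -
    have m: "scaleR (1/2) (s + t) \<in> S" using that S by (simp add: Lsub_add Lsub_scaleR)
    have "(\<psi> - s) + (\<psi> - t) = scaleR 2 (\<psi> - scaleR (1/2) (s + t))"
      by (simp add: algebra_simps scaleR_2)
    then have "norm ((\<psi> - s) + (\<psi> - t)) = 2 * norm (\<psi> - scaleR (1/2) (s + t))" by simp
    then have "norm ((\<psi> - s) + (\<psi> - t)) \<ge> 2 * d" using dle[OF m] by simp
    then have "(norm ((\<psi> - s) + (\<psi> - t)))\<^sup>2 \<ge> (2 * d)\<^sup>2" using d0 by (intro power_mono) auto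
    moreover have "(\<psi> - s) - (\<psi> - t) = t - s" by simp
    moreover have "norm (t - s) = norm (s - t)" by (rule norm_minus_commute)
    ultimately show ?thesis using parallelogram[of "\<psi> - s" "\<psi> - t"] by (simp add: power_mult_distrib)
  qed
  have cauchy: "Cauchy f"
  proof (rule CauchyI)
    fix e :: real assume e: "0 < e"
    obtain M where M: "4 / e\<^sup>2 < real M" using reals_Archimedean2 by blast
    show "\<exists>M. \<forall>m\<ge>M. \<forall>n\<ge>M. norm (f m - f n) < e"
    proof (intro exI allI impI)
      fix m n assume mn: "M \<le> m" "M \<le> n"
      have "(norm (f m - f n))\<^sup>2 \<le> 2 * (norm (\<psi> - f m))\<^sup>2 + 2 * (norm (\<psi> - f n))\<^sup>2 - 4 * d\<^sup>2"
        using key f(1) by blast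
      also have "\<dots> < 2 * (d\<^sup>2 + 1 / real (Suc m)) + 2 * (d\<^sup>2 + 1 / real (Suc n)) - 4 * d\<^sup>2"
        using f(2)[of m] f(2)[of n] by (smt (verit))
      also have "\<dots> = 2 / real (Suc m) + 2 / real (Suc n)" by simp
      also have "\<dots> \<le> 2 / real (Suc M) + 2 / real (Suc M)"
        using mn by (intro add_mono divide_left_mono) auto
      also have "\<dots> = 4 / real (Suc M)" by simp
      also have "\<dots> < e\<^sup>2"
      proof -
        have "4 / e\<^sup>2 < real (Suc M)" using M by simp
        then have "4 < e\<^sup>2 * real (Suc M)" using e by (simp add: field_simps)
        then show ?thesis by (simp add: field_simps)
      qed
      finally have "(norm (f m - f n))\<^sup>2 < e\<^sup>2" .
      then show "norm (f m - f n) < e" using e by (simp add: power_less_imp_less_base)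
    qed
  qed
  then obtain p where p: "f \<longlonglongrightarrow> p" using Cauchy_convergent_iff convergent_def by blast
  have pS: "p \<in> S" using closed_sequentially[OF Lsub_closed[OF S] f(1) p] .
  have lim1: "(\<lambda>n. (norm (\<psi> - f n))\<^sup>2) \<longlonglongrightarrow> (norm (\<psi> - p))\<^sup>2"
    by (intro tendsto_intros p)
  have lim2: "(\<lambda>n. d\<^sup>2 + 1 / real (Suc n)) \<longlonglongrightarrow> d\<^sup>2 + 0"
    by (intro tendsto_intros LIMSEQ_inverse_real_of_nat[unfolded inverse_eq_divide])
  have "(norm (\<psi> - p))\<^sup>2 \<le> d\<^sup>2 + 0"
    by (rule LIMSEQ_le[OF lim1 lim2]) (use f(2) less_imp_le in blast)
  then have pmin: "(norm (\<psi> - p))\<^sup>2 \<le> (norm (\<psi> - s))\<^sup>2" if "s \<in> S" for s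
    using dle[OF that] d0 power_mono[of d "norm (\<psi> - s)" 2] by simp
  show ?thesis
  proof (intro bexI[OF _ pS] ballI)
    fix s assume sS: "s \<in> S"
    define r where "r = \<psi> - p"
    define c where "c = hinner s r"
    show "hinner s (\<psi> - p) = 0"
    proof (rule ccontr)
      assume "hinner s (\<psi> - p) \<noteq> 0"
      then have c0: "c \<noteq> 0" by (simp add: c_def r_def)
      define \<epsilon> where "\<epsilon> = 1 / ((norm s)\<^sup>2 + 1)"
      have eps: "\<epsilon> > 0" by (simp add: \<epsilon>_def add_nonneg_pos)
      have eps1: "\<epsilon> * (norm s)\<^sup>2 < 1"
      proof -
        have p1: "0 < (norm s)\<^sup>2 + 1" by (simp add: add_nonneg_pos)
        have "(norm s)\<^sup>2 / ((norm s)\<^sup>2 + 1) < 1" using p1 by (subst divide_less_eq_1_pos) auto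
        then show ?thesis by (simp add: \<epsilon>_def)
      qed
      define t where "t = complex_of_real \<epsilon> * c"
      have "p + hscale t s \<in> S" using S pS sS by (simp add: Lsub_add Lsub_hscale)
      from pmin[OF this] have "(norm r)\<^sup>2 \<le> (norm (r - hscale t s))\<^sup>2"
        by (simp add: r_def diff_diff_eq)
      also have "(norm (r - hscale t s))\<^sup>2 = (norm r)\<^sup>2 + (cmod t * norm s)\<^sup>2 - 2 * Re (t * hinner r s)"
        by (simp add: norm_diff_sq norm_hscale hinner_hscale_right)
      also have "hinner r s = cnj c" by (simp add: c_def hinner_commute[of s r])
      also have "t * cnj c = complex_of_real (\<epsilon> * (cmod c)\<^sup>2)"
        by (simp add: t_def mult.assoc complex_norm_square[symmetric])
      also have "(cmod t * norm s)\<^sup>2 = \<epsilon> * (cmod c)\<^sup>2 * (\<epsilon> * (norm s)\<^sup>2)"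
        using eps by (simp add: t_def norm_mult power_mult_distrib power2_eq_square)
      finally have "0 \<le> \<epsilon> * (cmod c)\<^sup>2 * (\<epsilon> * (norm s)\<^sup>2) - 2 * (\<epsilon> * (cmod c)\<^sup>2)" by simp
      moreover have "\<epsilon> * (cmod c)\<^sup>2 > 0" using eps c0 by simp
      ultimately show False using eps1
        by (smt (verit, best) mult_less_cancel_left2)
    qed
  qed
qed

lemma proj_unique_aux:
  fixes S :: "'a::chilbert set"
  assumes S: "S \<in> Lsub" and p: "p \<in> S" "\<forall>s\<in>S. hinner s (\<psi> - p) = 0"
    and q: "q \<in> S" "\<forall>s\<in>S. hinner s (\<psi> - q) = 0"
  shows "p = q"
proof -
  have pq: "p - q \<in> S" using S p q by (simp add: Lsub_diff)
  have "hinner (p - q) (\<psi> - q) - hinner (p - q) (\<psi> - p) = 0" using p q pq by simp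
  then have "hinner (p - q) (p - q) = 0" by (simp add: hinner_diff_right)
  then show ?thesis by simp
qed

lemma proj_props:
  fixes S :: "'a::chilbert set"
  assumes S: "S \<in> Lsub"
  shows "proj S \<psi> \<in> S" "\<And>s. s \<in> S \<Longrightarrow> hinner s (\<psi> - proj S \<psi>) = 0"
proof -
  have ex1: "\<exists>!p. p \<in> S \<and> (\<forall>s\<in>S. hinner s (\<psi> - p) = 0)"
    using proj_exists[OF S] proj_unique_aux[OF S] by blast
  have "proj S \<psi> \<in> S \<and> (\<forall>s\<in>S. hinner s (\<psi> - proj S \<psi>) = 0)"
    unfolding proj_def by (rule theI'[OF ex1])
  then show "proj S \<psi> \<in> S" "\<And>s. s \<in> S \<Longrightarrow> hinner s (\<psi> - proj S \<psi>) = 0" by auto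
qed

lemma proj_eqI:
  fixes S :: "'a::chilbert set"
  assumes S: "S \<in> Lsub" and "p \<in> S" "\<And>s. s \<in> S \<Longrightarrow> hinner s (\<psi> - p) = 0"
  shows "proj S \<psi> = p"
  using proj_unique_aux[OF S, of "proj S \<psi>" \<psi> p] proj_props[OF S] assms by blast

lemma proj_pythag:
  fixes S :: "'a::chilbert set"
  assumes S: "S \<in> Lsub"
  shows "(norm \<psi>)\<^sup>2 = (norm (proj S \<psi>))\<^sup>2 + (norm (\<psi> - proj S \<psi>))\<^sup>2"
proof -
  have "hinner (proj S \<psi>) (\<psi> - proj S \<psi>) = 0" using proj_props[OF S] by blast
  then have "Re (hinner (proj S \<psi>) (\<psi> - proj S \<psi>)) = 0" by simp
  then show ?thesis using norm_add_sq[of "proj S \<psi>" "\<psi> - proj S \<psi>"] by simp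
qed

lemma proj_le: "S \<in> Lsub \<Longrightarrow> (norm (proj S \<psi>))\<^sup>2 \<le> (norm (\<psi>::'a::chilbert))\<^sup>2"
  using proj_pythag[of S \<psi>] by simp

lemma proj_full_iff:
  fixes S :: "'a::chilbert set"
  assumes S: "S \<in> Lsub"
  shows "(norm (proj S \<psi>))\<^sup>2 = (norm \<psi>)\<^sup>2 \<longleftrightarrow> \<psi> \<in> S"
proof
  assume "(norm (proj S \<psi>))\<^sup>2 = (norm \<psi>)\<^sup>2"
  then have "\<psi> - proj S \<psi> = 0" using proj_pythag[OF S, of \<psi>] by simp
  then show "\<psi> \<in> S" using proj_props(1)[OF S, of \<psi>] by simp
next
  assume "\<psi> \<in> S"
  then have "proj S \<psi> = \<psi>" by (intro proj_eqI[OF S]) auto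
  then show "(norm (proj S \<psi>))\<^sup>2 = (norm \<psi>)\<^sup>2" by simp
qed

lemma proj_hscale:
  fixes S :: "'a::chilbert set"
  assumes S: "S \<in> Lsub"
  shows "proj S (hscale c \<psi>) = hscale c (proj S \<psi>)"
proof (rule proj_eqI[OF S])
  show "hscale c (proj S \<psi>) \<in> S" using S proj_props(1)[OF S] by (simp add: Lsub_hscale)
  fix s assume "s \<in> S"
  then have "hinner s (\<psi> - proj S \<psi>) = 0" using proj_props(2)[OF S] by blast
  then show "hinner s (hscale c \<psi> - hscale c (proj S \<psi>)) = 0"
    by (simp add: hscale_diff_right[symmetric] hinner_hscale_right)
qed


lemma mem_ray: "x \<in> ray \<psi> \<longleftrightarrow> (\<exists>l. x = hscale l \<psi>)"
  by (auto simp: ray_def)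

lemma self_in_ray: "(\<psi>::'a::chilbert) \<in> ray \<psi>"
  unfolding mem_ray by (metis hscale_one)

lemma ray_zero: "ray (0::'a::chilbert) = {0}"
  by (auto simp: ray_def)

lemma ray_hscale:
  fixes \<psi> :: "'a::chilbert"
  assumes "c \<noteq> 0"
  shows "ray (hscale c \<psi>) = ray \<psi>"
proof
  show "ray (hscale c \<psi>) \<subseteq> ray \<psi>" by (auto simp: mem_ray hscale_hscale)
  show "ray \<psi> \<subseteq> ray (hscale c \<psi>)"
  proof
    fix x assume "x \<in> ray \<psi>"
    then obtain l where "x = hscale l \<psi>" by (auto simp: mem_ray)
    then have "x = hscale (l / c) (hscale c \<psi>)" using assms by (simp add: hscale_hscale)
    then show "x \<in> ray (hscale c \<psi>)" by (auto simp: mem_ray)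
  qed
qed

lemma ray_subset_eq:
  fixes \<phi> \<psi> :: "'a::chilbert"
  assumes "\<phi> \<noteq> 0" "ray \<phi> \<subseteq> ray \<psi>"
  shows "ray \<phi> = ray \<psi>" "\<exists>c. c \<noteq> 0 \<and> \<phi> = hscale c \<psi>"
proof -
  have "\<phi> \<in> ray \<psi>" using assms(2) self_in_ray[of \<phi>] by blast
  then obtain c where c: "\<phi> = hscale c \<psi>" by (auto simp: mem_ray)
  have "c \<noteq> 0" using c assms(1) by auto
  then show "ray \<phi> = ray \<psi>" "\<exists>c. c \<noteq> 0 \<and> \<phi> = hscale c \<psi>" using c ray_hscale by auto
qed

lemma ray_eq_iff:
  fixes \<phi> \<psi> :: "'a::chilbert"
  assumes "\<phi> \<noteq> 0"
  shows "ray \<phi> = ray \<psi> \<longleftrightarrow> (\<exists>c. c \<noteq> 0 \<and> \<phi> = hscale c \<psi>)"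
  using ray_subset_eq[OF assms] ray_hscale by (metis order_refl)

lemma in_ray_ray_eq:
  fixes \<phi> \<psi> :: "'a::chilbert"
  assumes "\<phi> \<noteq> 0" "\<phi> \<in> ray \<psi>"
  shows "ray \<phi> = ray \<psi>"
  using assms by (metis mem_ray ray_hscale hscale_zero_left)

lemma rep_props:
  assumes "r \<in> (rays :: 'a::chilbert set set)"
  shows "rep r \<noteq> 0" "r = ray (rep r)"
proof -
  have "\<exists>\<psi>::'a. \<psi> \<noteq> 0 \<and> r = ray \<psi>" using assms by (auto simp: rays_def)
  then have "rep r \<noteq> 0 \<and> r = ray (rep r)" unfolding rep_def by (rule someI_ex)
  then show "rep r \<noteq> 0" "r = ray (rep r)" by auto
qed

lemma ray_in_rays: "(\<psi>::'a::chilbert) \<noteq> 0 \<Longrightarrow> ray \<psi> \<in> rays"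
  by (auto simp: rays_def)

lemma rep_ray:
  fixes \<psi> :: "'a::chilbert"
  assumes "\<psi> \<noteq> 0"
  shows "\<exists>c. c \<noteq> 0 \<and> rep (ray \<psi>) = hscale c \<psi>"
proof -
  have r: "ray \<psi> \<in> rays" using assms by (rule ray_in_rays)
  show ?thesis using rep_props[OF r] ray_eq_iff by metis
qed

lemma ray_rep: "r \<in> (rays :: 'a::chilbert set set) \<Longrightarrow> ray (rep r) = r"
  using rep_props by metis

lemma unit_exists:
  fixes \<psi> :: "'a::chilbert"
  assumes "\<psi> \<noteq> 0"
  shows "norm (hscale (complex_of_real (1 / norm \<psi>)) \<psi>) = 1"
  using assms by (simp add: norm_hscale norm_divide)

lemma ray_unit_char:
  fixes u :: "'a::chilbert"
  assumes u: "norm u = 1"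
  shows "ray u = {x. x = hscale (hinner u x) u}"
proof
  show "ray u \<subseteq> {x. x = hscale (hinner u x) u}"
  proof
    fix x assume "x \<in> ray u"
    then obtain l where x: "x = hscale l u" by (auto simp: mem_ray)
    have "hinner u x = l" using u by (simp add: x hinner_hscale_right hinner_norm)
    then show "x \<in> {x. x = hscale (hinner u x) u}" using x by simp
  qed
  show "{x. x = hscale (hinner u x) u} \<subseteq> ray u" by (auto simp: mem_ray)
qed

lemma closed_fixed:
  fixes P :: "'a::chilbert \<Rightarrow> 'a"
  assumes "continuous_on UNIV P"
  shows "closed {x. x = P x}"
  by (rule closed_Collect_eq[OF continuous_on_id assms])

lemma ray_Lsub_unit:
  fixes u :: "'a::chilbert"
  assumes u: "norm u = 1"
  shows "ray u \<in> Lsub"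
proof -
  have "closed (ray u)" unfolding ray_unit_char[OF u]
    by (rule closed_fixed[OF continuous_on_hinner_scale])
  moreover have "0 \<in> ray u" by (auto simp: mem_ray intro: exI[of _ 0])
  moreover have "x + y \<in> ray u" if "x \<in> ray u" "y \<in> ray u" for x y
    using that by (auto simp: mem_ray hscale_add_left[symmetric])
  moreover have "hscale c x \<in> ray u" if "x \<in> ray u" for c x
    using that by (auto simp: mem_ray hscale_hscale)
  ultimately show ?thesis by (auto simp: Lsub_def)
qed

lemma ray_Lsub:
  fixes \<psi> :: "'a::chilbert"
  assumes "\<psi> \<noteq> 0"
  shows "ray \<psi> \<in> Lsub"
proof -
  have "ray \<psi> = ray (hscale (complex_of_real (1 / norm \<psi>)) \<psi>)"
    using assms by (simp add: ray_hscale)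
  then show ?thesis using ray_Lsub_unit[OF unit_exists[OF assms]] by simp
qed

lemma rays_Lsub: "r \<in> (rays :: 'a::chilbert set set) \<Longrightarrow> r \<in> Lsub"
  by (auto simp: rays_def ray_Lsub)

lemma proj_ray:
  fixes u :: "'a::chilbert"
  assumes u: "norm u = 1"
  shows "proj (ray u) x = hscale (hinner u x) u"
proof (rule proj_eqI[OF ray_Lsub_unit[OF u]])
  show "hscale (hinner u x) u \<in> ray u" by (auto simp: mem_ray)
  fix s assume "s \<in> ray u"
  then obtain l where s: "s = hscale l u" by (auto simp: mem_ray)
  show "hinner s (x - hscale (hinner u x) u) = 0"
    using u by (simp add: s hinner_simps hinner_norm)
qed

lemma ebar_vec:
  fixes \<psi> :: "'a::chilbert"
  assumes "\<psi> \<noteq> 0" "S \<in> Lsub"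
  shows "ebar (ray \<psi>) S = (norm (proj S \<psi>))\<^sup>2 / (norm \<psi>)\<^sup>2"
proof -
  obtain c where c: "c \<noteq> 0" "rep (ray \<psi>) = hscale c \<psi>" using rep_ray[OF assms(1)] by blast
  have "ebar (ray \<psi>) S = (cmod c * norm (proj S \<psi>))\<^sup>2 / (cmod c * norm \<psi>)\<^sup>2"
    unfolding ebar_def c(2) proj_hscale[OF assms(2)] norm_hscale ..
  also have "\<dots> = (norm (proj S \<psi>))\<^sup>2 / (norm \<psi>)\<^sup>2"
    using c(1) by (simp add: power_mult_distrib)
  finally show ?thesis .
qed

lemma ebar_ray_unit:
  fixes \<psi> u :: "'a::chilbert"
  assumes "\<psi> \<noteq> 0" "norm u = 1"
  shows "ebar (ray \<psi>) (ray u) = (cmod (hinner u \<psi>))\<^sup>2 / (norm \<psi>)\<^sup>2"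
  using ebar_vec[OF assms(1) ray_Lsub_unit[OF assms(2)]] assms(2)
  by (simp add: proj_ray norm_hscale)

lemma ebar_le1:
  fixes \<psi> :: "'a::chilbert"
  assumes "\<psi> \<noteq> 0" "S \<in> Lsub"
  shows "0 \<le> ebar (ray \<psi>) S" "ebar (ray \<psi>) S \<le> 1"
  using ebar_vec[OF assms] proj_le[OF assms(2), of \<psi>] assms(1) by auto

lemma ebar_one_iff:
  fixes \<psi> :: "'a::chilbert"
  assumes "\<psi> \<noteq> 0" "S \<in> Lsub"
  shows "ebar (ray \<psi>) S = 1 \<longleftrightarrow> \<psi> \<in> S"
  using ebar_vec[OF assms] proj_full_iff[OF assms(2), of \<psi>] assms(1) by auto

lemma ebar_one_iff_ray:
  fixes \<psi> :: "'a::chilbert"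
  assumes "\<psi> \<noteq> 0" "S \<in> Lsub"
  shows "ebar (ray \<psi>) S = 1 \<longleftrightarrow> ray \<psi> \<subseteq> S"
proof -
  have "\<psi> \<in> S \<longleftrightarrow> ray \<psi> \<subseteq> S"
  proof
    assume "\<psi> \<in> S" then show "ray \<psi> \<subseteq> S" using assms(2) by (auto simp: mem_ray intro: Lsub_hscale)
  next
    assume "ray \<psi> \<subseteq> S" then show "\<psi> \<in> S" using self_in_ray[of \<psi>] by blast
  qed
  then show ?thesis unfolding ebar_one_iff[OF assms] .
qed

definition span2 :: "'a::chilbert \<Rightarrow> 'a \<Rightarrow> 'a set" where
  "span2 e f = {hscale a e + hscale b f | a b. True}"

lemma span2_char:
  fixes e f :: "'a::chilbert"
  assumes on: "norm e = 1" "norm f = 1" "hinner e f = 0"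
  shows "span2 e f = {x. x = hscale (hinner e x) e + hscale (hinner f x) f}"
proof
  have fe: "hinner f e = 0" using on(3) by (simp add: hinner_commute[of f e])
  show "span2 e f \<subseteq> {x. x = hscale (hinner e x) e + hscale (hinner f x) f}"
  proof
    fix x assume "x \<in> span2 e f"
    then obtain a b where x: "x = hscale a e + hscale b f" by (auto simp: span2_def)
    have "hinner e x = a" "hinner f x = b" using on fe by (simp_all add: x hinner_simps hinner_norm)
    then show "x \<in> {x. x = hscale (hinner e x) e + hscale (hinner f x) f}" using x by simp
  qed
  show "{x. x = hscale (hinner e x) e + hscale (hinner f x) f} \<subseteq> span2 e f"
    by (auto simp: span2_def)
qed

lemma span2_Lsub:
  fixes e f :: "'a::chilbert"
  assumes on: "norm e = 1" "norm f = 1" "hinner e f = 0"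
  shows "span2 e f \<in> Lsub"
proof -
  have "closed (span2 e f)" unfolding span2_char[OF on]
    by (rule closed_fixed) (intro continuous_on_add continuous_on_hinner_scale)
  moreover have "0 \<in> span2 e f" by (auto simp: span2_def intro!: exI[of _ 0])
  moreover have "x + y \<in> span2 e f" if "x \<in> span2 e f" "y \<in> span2 e f" for x y
  proof -
    from that(1) obtain a b where x: "x = hscale a e + hscale b f" unfolding span2_def by blast
    from that(2) obtain a' b' where y: "y = hscale a' e + hscale b' f" unfolding span2_def by blast
    have "x + y = hscale (a + a') e + hscale (b + b') f" by (simp add: x y hscale_add_left algebra_simps)
    then show ?thesis by (auto simp: span2_def)
  qed
  moreover have "hscale c x \<in> span2 e f" if "x \<in> span2 e f" for c x
  proof -
    from that obtain a b where x: "x = hscale a e + hscale b f" unfolding span2_def by blast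
    have "hscale c x = hscale (c * a) e + hscale (c * b) f" by (simp add: x hscale_add_right hscale_hscale)
    then show ?thesis by (auto simp: span2_def)
  qed
  ultimately show ?thesis by (auto simp: Lsub_def)
qed

lemma proj_span2:
  fixes e f :: "'a::chilbert"
  assumes on: "norm e = 1" "norm f = 1" "hinner e f = 0"
  shows "proj (span2 e f) x = hscale (hinner e x) e + hscale (hinner f x) f"
proof (rule proj_eqI[OF span2_Lsub[OF on]])
  have fe: "hinner f e = 0" using on(3) by (simp add: hinner_commute[of f e])
  show "hscale (hinner e x) e + hscale (hinner f x) f \<in> span2 e f" by (auto simp: span2_def)
  fix s assume "s \<in> span2 e f"
  then obtain a b where s: "s = hscale a e + hscale b f" by (auto simp: span2_def)
  show "hinner s (x - (hscale (hinner e x) e + hscale (hinner f x) f)) = 0"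
    using on fe by (simp add: s hinner_simps hinner_norm algebra_simps)
qed

lemma norm_proj_span2:
  fixes e f :: "'a::chilbert"
  assumes on: "norm e = 1" "norm f = 1" "hinner e f = 0"
  shows "(norm (proj (span2 e f) x))\<^sup>2 = (cmod (hinner e x))\<^sup>2 + (cmod (hinner f x))\<^sup>2"
proof -
  have "(norm (hscale (hinner e x) e + hscale (hinner f x) f))\<^sup>2
      = (cmod (hinner e x))\<^sup>2 + (cmod (hinner f x))\<^sup>2 + 2 * Re (hinner (hscale (hinner e x) e) (hscale (hinner f x) f))"
    using on by (simp add: norm_add_sq norm_hscale)
  also have "hinner (hscale (hinner e x) e) (hscale (hinner f x) f) = 0"
    using on by (simp add: hinner_simps)
  finally show ?thesis using proj_span2[OF on] by simp
qed

lemma span2_mem: "hscale a e + hscale b f \<in> span2 e f"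
  by (auto simp: span2_def)


definition isig :: "(complex \<Rightarrow> complex) \<Rightarrow> bool" where
  "isig \<sigma> \<longleftrightarrow> \<sigma> = id \<or> \<sigma> = cnj"

lemma isig_props:
  assumes "isig \<sigma>"
  shows "\<sigma> (a + b) = \<sigma> a + \<sigma> b" "\<sigma> (a - b) = \<sigma> a - \<sigma> b" "\<sigma> (a * b) = \<sigma> a * \<sigma> b"
    "\<sigma> (complex_of_real r) = complex_of_real r" "\<sigma> 0 = 0" "\<sigma> 1 = 1"
    "\<sigma> c = 0 \<longleftrightarrow> c = 0" "cmod (\<sigma> c) = cmod c" "\<sigma> (\<sigma> c) = c" "Re (\<sigma> c) = Re c"
    "\<sigma> (a / b) = \<sigma> a / \<sigma> b" "\<sigma> (cnj c) = cnj (\<sigma> c)" "\<sigma> (- c) = - \<sigma> c"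
  using assms by (auto simp: isig_def)

lemma semiunitaryE:
  assumes "semiunitary (U :: 'a::chilbert \<Rightarrow> 'b::chilbert)"
  obtains \<sigma> where "isig \<sigma>" "bij U" "\<And>x y. U (x + y) = U x + U y"
    "\<And>l x. U (hscale l x) = hscale (\<sigma> l) (U x)" "\<And>x y. hinner (U x) (U y) = \<sigma> (hinner x y)"
proof -
  from assms obtain \<sigma> where "bij U" "\<forall>x y. U (x + y) = U x + U y" "\<sigma> \<in> {id, cnj}"
    "\<forall>l x. U (hscale l x) = hscale (\<sigma> l) (U x)" "\<forall>x y. hinner (U x) (U y) = \<sigma> (hinner x y)"
    unfolding semiunitary_def by blast
  then show thesis using that unfolding isig_def by blast
qed

lemma su_basic:
  fixes U :: "'a::chilbert \<Rightarrow> 'b::chilbert"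
  assumes su: "semiunitary U"
  shows "U 0 = 0" "\<And>x y. U (x + y) = U x + U y" "\<And>x y. U (x - y) = U x - U y"
    "\<And>x. norm (U x) = norm x" "\<And>x y. U x = U y \<longleftrightarrow> x = y" "\<And>x. U x = 0 \<longleftrightarrow> x = 0"
    "\<And>x y. cmod (hinner (U x) (U y)) = cmod (hinner x y)"
    "\<And>x y. hinner (U x) (U y) = 0 \<longleftrightarrow> hinner x y = 0"
    "bounded_linear U" "\<And>y. \<exists>x. U x = y"
proof -
  obtain \<sigma> where s: "isig \<sigma>" "bij U" "\<And>x y. U (x + y) = U x + U y"
    "\<And>l x. U (hscale l x) = hscale (\<sigma> l) (U x)" "\<And>x y. hinner (U x) (U y) = \<sigma> (hinner x y)"
    using semiunitaryE[OF su] by metis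
  show U0: "U 0 = 0" using s(3)[of 0 0] by simp
  show "\<And>x y. U (x + y) = U x + U y" by (rule s(3))
  show Udiff: "\<And>x y. U (x - y) = U x - U y" by (metis s(3) diff_add_cancel eq_diff_eq)
  show nU: "\<And>x. norm (U x) = norm x"
  proof -
    fix x
    have "complex_of_real ((norm (U x))\<^sup>2) = complex_of_real ((norm x)\<^sup>2)"
      using s(5)[of x x] isig_props(4)[OF s(1)] by (simp add: hinner_norm del: of_real_power)
    then have "(norm (U x))\<^sup>2 = (norm x)\<^sup>2" using of_real_eq_iff by blast
    then show "norm (U x) = norm x" by (simp add: power2_eq_iff_nonneg)
  qed
  show inj: "\<And>x y. U x = U y \<longleftrightarrow> x = y" using s(2) by (auto simp: bij_def inj_def)
  show "\<And>x. U x = 0 \<longleftrightarrow> x = 0" using inj U0 by metis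
  show "\<And>x y. cmod (hinner (U x) (U y)) = cmod (hinner x y)" using s(5) isig_props(8)[OF s(1)] by simp
  show "\<And>x y. hinner (U x) (U y) = 0 \<longleftrightarrow> hinner x y = 0" using s(5) isig_props(7)[OF s(1)] by simp
  show "bounded_linear U"
  proof (rule bounded_linear_intro[where K=1])
    show "\<And>x y. U (x + y) = U x + U y" by (rule s(3))
    show "\<And>r x. U (scaleR r x) = scaleR r (U x)"
      using s(4) isig_props(4)[OF s(1)] by (simp add: scaleR_hscale)
    show "\<And>x. norm (U x) \<le> norm x * 1" using nU by simp
  qed
  show "\<And>y. \<exists>x. U x = y" using s(2) unfolding bij_def surj_def by metis
qed

lemma su_hscale_inv:
  fixes U :: "'a::chilbert \<Rightarrow> 'b::chilbert"
  assumes su: "semiunitary U"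
  shows "\<exists>d. d \<noteq> 0 \<and> hscale c (U x) = U (hscale d x) \<or> c = 0"
proof -
  obtain \<sigma> where s: "isig \<sigma>" "\<And>l x. U (hscale l x) = hscale (\<sigma> l) (U x)"
    using semiunitaryE[OF su] by metis
  have "U (hscale (\<sigma> c) x) = hscale c (U x)" using s(2) isig_props(9)[OF s(1)] by simp
  then show ?thesis using isig_props(7)[OF s(1)] by metis
qed

lemma su_ray:
  fixes U :: "'a::chilbert \<Rightarrow> 'b::chilbert"
  assumes su: "semiunitary U" and "c \<noteq> 0"
  shows "ray (U (hscale c x)) = ray (U x)"
proof -
  obtain \<sigma> where s: "isig \<sigma>" "\<And>l x. U (hscale l x) = hscale (\<sigma> l) (U x)"
    using semiunitaryE[OF su] by metis
  show ?thesis using s(2) ray_hscale isig_props(7)[OF s(1)] assms(2) by metis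
qed

lemma su_vimage_Lsub:
  fixes U :: "'a::chilbert \<Rightarrow> 'b::chilbert"
  assumes su: "semiunitary U" and S: "S \<in> Lsub"
  shows "U -` S \<in> Lsub"
proof -
  obtain \<sigma> where s: "isig \<sigma>" "\<And>l x. U (hscale l x) = hscale (\<sigma> l) (U x)"
    using semiunitaryE[OF su] by metis
  note b = su_basic[OF su]
  have "continuous_on UNIV U"
    using bounded_linear.continuous_on[OF b(9) continuous_on_id] by simp
  then have "closed (U -` S)" using Lsub_closed[OF S] by (intro closed_vimage)
  then show ?thesis using S b(1) b(2) s(2) by (auto simp: Lsub_def)
qed

lemma su_proj:
  fixes U :: "'a::chilbert \<Rightarrow> 'b::chilbert"
  assumes su: "semiunitary U" and S: "S \<in> Lsub"
  shows "norm (proj (U -` S) \<psi>) = norm (proj S (U \<psi>))"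
proof -
  obtain \<sigma> where s: "isig \<sigma>" "\<And>x y. hinner (U x) (U y) = \<sigma> (hinner x y)"
    using semiunitaryE[OF su] by metis
  note b = su_basic[OF su]
  obtain q where q: "U q = proj S (U \<psi>)" using b(10) by blast
  have "proj (U -` S) \<psi> = q"
  proof (rule proj_eqI[OF su_vimage_Lsub[OF su S]])
    show "q \<in> U -` S" using q proj_props(1)[OF S] by simp
    fix s assume "s \<in> U -` S"
    then have "hinner (U s) (U \<psi> - U q) = 0" using q proj_props(2)[OF S] by simp
    then have "\<sigma> (hinner s (\<psi> - q)) = 0" using s(2) b(3) by metis
    then show "hinner s (\<psi> - q) = 0" using isig_props(7)[OF s(1)] by simp
  qed
  then show ?thesis using q b(4) by metis
qed

lemma su_bm_morph:
  fixes U :: "'a::chilbert \<Rightarrow> 'b::chilbert"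
  assumes su: "semiunitary U"
  shows "bm_morph rays Lsub ebar rays Lsub ebar (PU U) (vimage U)"
proof -
  note b = su_basic[OF su]
  have A: "\<forall>x\<in>rays. PU U x \<in> rays"
  proof
    fix x :: "'a set" assume "x \<in> rays"
    then have "U (rep x) \<noteq> 0" using rep_props(1) b(6) by blast
    then show "PU U x \<in> rays" unfolding PU_def by (rule ray_in_rays)
  qed
  have B: "\<forall>a'\<in>Lsub. U -` a' \<in> Lsub" using su_vimage_Lsub[OF su] by blast
  have C: "ebar r (U -` S) = ebar (PU U r) S" if r: "r \<in> rays" and S: "S \<in> Lsub" for r S
  proof -
    have r0: "rep r \<noteq> 0" "r = ray (rep r)" using rep_props[OF r] by auto
    have "ebar r (U -` S) = (norm (proj (U -` S) (rep r)))\<^sup>2 / (norm (rep r))\<^sup>2"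
      using ebar_vec[OF r0(1) su_vimage_Lsub[OF su S]] r0(2) by simp
    also have "\<dots> = (norm (proj S (U (rep r))))\<^sup>2 / (norm (U (rep r)))\<^sup>2"
      using su_proj[OF su S] b(4) by simp
    also have "\<dots> = ebar (PU U r) S"
      unfolding PU_def using ebar_vec[of "U (rep r)" S] b(6) r0(1) S by simp
    finally show ?thesis .
  qed
  have D: "inj_on (PU U) rays"
  proof (rule inj_onI)
    fix r1 r2 assume r: "r1 \<in> rays" "r2 \<in> rays" "PU U r1 = PU U r2"
    have r1: "rep r1 \<noteq> 0" "r1 = ray (rep r1)" using rep_props[OF r(1)] by auto
    have r2: "rep r2 \<noteq> 0" "r2 = ray (rep r2)" using rep_props[OF r(2)] by auto
    have "ray (U (rep r1)) = ray (U (rep r2))" using r(3) by (simp add: PU_def)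
    then obtain c where c: "c \<noteq> 0" "U (rep r1) = hscale c (U (rep r2))"
      using ray_eq_iff[of "U (rep r1)"] b(6) r1(1) by blast
    then obtain d where d: "d \<noteq> 0" "U (rep r1) = U (hscale d (rep r2))"
      using su_hscale_inv[OF su, of c "rep r2"] by metis
    then have "rep r1 = hscale d (rep r2)" using b(5) by blast
    then show "r1 = r2" using r1 r2 d(1) ray_hscale by metis
  qed
  show ?thesis unfolding bm_morph_def chu_morph_def using A B C D by blast
qed


declare hscale_one[simp]

lemma hscale_eq_zero_iff: "hscale c (v::'a::chilbert) = 0 \<longleftrightarrow> c = 0 \<or> v = 0"
proof -
  have "hscale c v = 0 \<longleftrightarrow> norm (hscale c v) = 0" by simp
  then show ?thesis by (simp add: norm_hscale)
qed

lemma dim_gt2_nonzero: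
  assumes "dim_gt2 TYPE('a::chilbert)"
  shows "\<exists>x::'a. x \<noteq> 0"
proof -
  obtain x y z :: 'a where h: "\<forall>a b c. hscale a x + hscale b y + hscale c z = 0 \<longrightarrow> a = 0 \<and> b = 0 \<and> c = 0"
    using assms unfolding dim_gt2_def by blast
  have "x \<noteq> 0"
  proof
    assume "x = 0" then show False using h[rule_format, of 1 0 0] by simp
  qed
  then show ?thesis by blast
qed

lemma dim_gt2_notin_ray:
  assumes "dim_gt2 TYPE('a::chilbert)" and w: "(w::'a) \<noteq> 0"
  shows "\<exists>z. z \<notin> ray w"
proof (rule ccontr)
  assume "\<not> (\<exists>z. z \<notin> ray w)"
  then have all: "\<And>z. z \<in> ray w" by blast
  obtain x y z :: 'a where h: "\<forall>a b c. hscale a x + hscale b y + hscale c z = 0 \<longrightarrow> a = 0 \<and> b = 0 \<and> c = 0"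
    using assms unfolding dim_gt2_def by blast
  obtain a where a: "x = hscale a w" using all[of x] by (auto simp: mem_ray)
  obtain b where b: "y = hscale b w" using all[of y] by (auto simp: mem_ray)
  have "hscale b x + hscale (- a) y + hscale 0 z = 0"
    by (simp add: a b hscale_hscale hscale_minus_left mult.commute)
  then have "b = 0 \<and> - a = 0" using h[rule_format, of b "- a" 0] by blast
  then have "x = 0" using a by simp
  then show False using h[rule_format, of 1 0 0] by simp
qed

lemma su_hscale_inv2:
  fixes U :: "'a::chilbert \<Rightarrow> 'b::chilbert"
  assumes su: "semiunitary U"
  shows "\<exists>d. hscale c (U x) = U (hscale d x)"
proof -
  obtain \<sigma> where s: "isig \<sigma>" "\<And>l x. U (hscale l x) = hscale (\<sigma> l) (U x)"
    using semiunitaryE[OF su] by metis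
  have "U (hscale (\<sigma> c) x) = hscale c (U x)" using s(2) isig_props(9)[OF s(1)] by simp
  then show ?thesis by metis
qed

theorem part_objects:
  "chu_space01 (rays :: 'a::chilbert set set) Lsub ebar \<and> biextensional_chu (rays :: 'a set set) Lsub ebar"
proof -
  have A: "chu_space01 (rays :: 'a set set) Lsub ebar"
    unfolding chu_space01_def
  proof (intro ballI)
    fix r :: "'a set" and S :: "'a set" assume r: "r \<in> rays" and S: "S \<in> Lsub"
    have "rep r \<noteq> 0" "r = ray (rep r)" using rep_props[OF r] by auto
    then show "ebar r S \<in> {0..1}" using ebar_le1[OF _ S, of "rep r"] by (metis atLeastAtMost_iff)
  qed
  have B: "extensional_chu (rays :: 'a set set) Lsub ebar"
    unfolding extensional_chu_def
  proof (intro ballI impI)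
    have sub: "S1 \<subseteq> S2" if S: "S1 \<in> Lsub" "S2 \<in> Lsub" and h: "\<forall>x\<in>(rays :: 'a set set). ebar x S1 = ebar x S2"
      for S1 S2 :: "'a set"
    proof
      fix v assume v: "v \<in> S1"
      show "v \<in> S2"
      proof (cases "v = 0")
        case True then show ?thesis using Lsub_zero[OF S(2)] by simp
      next
        case False
        have "ebar (ray v) S1 = 1" using ebar_one_iff[OF False S(1)] v by simp
        then have "ebar (ray v) S2 = 1" using h ray_in_rays[OF False] by simp
        then show ?thesis using ebar_one_iff[OF False S(2)] by simp
      qed
    qed
    fix S1 S2 :: "'a set" assume "S1 \<in> Lsub" "S2 \<in> Lsub" "\<forall>x\<in>rays. ebar x S1 = ebar x S2"
    then show "S1 = S2" using sub[of S1 S2] sub[of S2 S1] by auto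
  qed
  have C: "separated_chu (rays :: 'a set set) Lsub ebar"
    unfolding separated_chu_def
  proof (intro ballI impI)
    fix r1 r2 :: "'a set" assume r: "r1 \<in> rays" "r2 \<in> rays" and h: "\<forall>a\<in>Lsub. ebar r1 a = ebar r2 a"
    have r1: "rep r1 \<noteq> 0" "r1 = ray (rep r1)" using rep_props[OF r(1)] by auto
    have r2: "rep r2 \<noteq> 0" "r2 = ray (rep r2)" using rep_props[OF r(2)] by auto
    have L: "r1 \<in> Lsub" using rays_Lsub[OF r(1)] .
    have "ebar r1 r1 = 1" using ebar_one_iff_ray[OF r1(1) L] r1(2) by simp
    then have "ebar r2 r1 = 1" using h L by simp
    then have "ray (rep r2) \<subseteq> r1" using ebar_one_iff_ray[OF r2(1) L] r2(2) by simp
    then have "ray (rep r2) \<subseteq> ray (rep r1)" using r1(2) by simp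
    then have "ray (rep r2) = ray (rep r1)" using ray_subset_eq(1)[OF r2(1)] by blast
    then show "r1 = r2" using r1 r2 by simp
  qed
  show ?thesis using A B C by (simp add: biextensional_chu_def)
qed

theorem part_equiv:
  fixes U V :: "'a::chilbert \<Rightarrow> 'b::chilbert"
  assumes "semiunitary U" "semiunitary V" "su_equiv U V"
  shows "chu_eq rays Lsub (PU U) (vimage U) (PU V) (vimage V)"
proof -
  obtain l where l: "cmod l = 1" "\<And>x. U x = hscale l (V x)" using assms(3) by (auto simp: su_equiv_def)
  have l0: "l \<noteq> 0" using l(1) by auto
  have A: "PU U r = PU V r" for r :: "'a set"
    unfolding PU_def l(2) by (rule ray_hscale[OF l0])
  have B: "U -` S = V -` S" if S: "S \<in> Lsub" for S
  proof -
    have "hscale l (V x) \<in> S \<longleftrightarrow> V x \<in> S" for x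
    proof
      assume "hscale l (V x) \<in> S"
      then have "hscale (1/l) (hscale l (V x)) \<in> S" by (rule Lsub_hscale[OF S])
      then show "V x \<in> S" using l0 by (simp add: hscale_hscale)
    qed (rule Lsub_hscale[OF S])
    then show ?thesis using l(2) by auto
  qed
  show ?thesis unfolding chu_eq_def using A B by auto
qed

theorem part_id:
  "chu_eq (rays :: 'a::chilbert set set) Lsub (PU (id :: 'a \<Rightarrow> 'a)) (vimage id) id id"
  unfolding chu_eq_def PU_def using ray_rep by auto

theorem part_comp:
  fixes U :: "'a::chilbert \<Rightarrow> 'b::chilbert" and V :: "'b \<Rightarrow> 'c::chilbert"
  assumes su: "semiunitary U" "semiunitary V"
  shows "chu_eq rays Lsub (PU (V \<circ> U)) (vimage (V \<circ> U)) (PU V \<circ> PU U) (vimage U \<circ> vimage V)"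
proof -
  have A: "PU (V \<circ> U) r = (PU V \<circ> PU U) r" if r: "r \<in> rays" for r :: "'a set"
  proof -
    have "U (rep r) \<noteq> 0" using rep_props(1)[OF r] su_basic(6)[OF su(1)] by blast
    then obtain c where c: "c \<noteq> 0" "rep (ray (U (rep r))) = hscale c (U (rep r))"
      using rep_ray by blast
    show ?thesis unfolding PU_def comp_def c(2) su_ray[OF su(2) c(1)] ..
  qed
  show ?thesis unfolding chu_eq_def using A by auto
qed

theorem part_faithful:
  fixes U V :: "'a::chilbert \<Rightarrow> 'b::chilbert"
  assumes dim: "dim_gt2 TYPE('a)" and su: "semiunitary U" "semiunitary V"
    and eq: "chu_eq rays Lsub (PU U) (vimage U) (PU V) (vimage V)"
  shows "su_equiv U V"
proof -
  note bU = su_basic[OF su(1)] and bV = su_basic[OF su(2)]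
  have step1: "\<exists>d. d \<noteq> 0 \<and> U x = hscale d (V x)" if x: "x \<noteq> 0" for x
  proof -
    obtain c where c: "c \<noteq> 0" "rep (ray x) = hscale c x" using rep_ray[OF x] by blast
    have "PU U (ray x) = PU V (ray x)" using eq ray_in_rays[OF x] by (simp add: chu_eq_def)
    then have "ray (U x) = ray (V x)" unfolding PU_def c(2) su_ray[OF su(1) c(1)] su_ray[OF su(2) c(1)] .
    then show ?thesis using ray_eq_iff[of "U x" "V x"] bU(6) x by blast
  qed
  then obtain dfun where dfun: "\<And>x. x \<noteq> 0 \<Longrightarrow> dfun x \<noteq> 0 \<and> U x = hscale (dfun x) (V x)" by metis
  have step2: "dfun x = dfun y" if x: "x \<noteq> 0" and y: "y \<notin> ray x" for x y
  proof (rule ccontr)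
    assume ne: "dfun x \<noteq> dfun y"
    have y0: "y \<noteq> 0"
    proof
      assume "y = 0" then have "y = hscale 0 x" by simp
      then show False using y unfolding mem_ray by blast
    qed
    have xy0: "x + y \<noteq> 0"
    proof
      assume "x + y = 0"
      then have "y = - x" by (simp add: add_eq_0_iff)
      then have "y = hscale (-1) x" by (simp add: minus_hscale)
      then show False using y by (auto simp: mem_ray)
    qed
    define a where "a = dfun x"
    define b where "b = dfun y"
    define c where "c = dfun (x + y)"
    have "hscale c (V x + V y) = hscale a (V x) + hscale b (V y)"
      using dfun[OF xy0] dfun[OF x] dfun[OF y0] bU(2)[of x y] bV(2)[of x y]
      unfolding a_def b_def c_def by simp
    then have eq2: "hscale (c - a) (V x) = hscale (b - c) (V y)"
      by (simp add: hscale_add_right hscale_diff_left algebra_simps)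
    show False
    proof (cases "c = b")
      case True
      then have "hscale (c - a) (V x) = 0" using eq2 by simp
      moreover have "c - a \<noteq> 0" using True ne a_def b_def by simp
      ultimately show False using bV(6) x by (simp add: hscale_eq_zero_iff)
    next
      case False
      then have bc: "b - c \<noteq> 0" by simp
      have "hscale (1/(b-c)) (hscale (c - a) (V x)) = hscale (1/(b-c)) (hscale (b - c) (V y))"
        using eq2 by simp
      then have "V y = hscale ((c - a) / (b - c)) (V x)" using bc by (simp add: hscale_hscale)
      then obtain k where "V y = V (hscale k x)"
        using su_hscale_inv2[OF su(2), of "(c - a) / (b - c)" x] by metis
      then have "y = hscale k x" using bV(5) by blast
      then show False using y by (auto simp: mem_ray)
    qed
  qed
  obtain x0 :: 'a where x0: "x0 \<noteq> 0" using dim_gt2_nonzero[OF dim] by blast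
  define l where "l = dfun x0"
  have all: "dfun x = l" if x: "x \<noteq> 0" for x
  proof (cases "x \<in> ray x0")
    case False then show ?thesis using step2[OF x0 False] l_def by simp
  next
    case True
    have rx: "ray x = ray x0" using in_ray_ray_eq[OF x True] .
    obtain z where z: "z \<notin> ray x0" using dim_gt2_notin_ray[OF dim x0] by blast
    have "dfun x0 = dfun z" using step2[OF x0 z] .
    moreover have "dfun x = dfun z" using step2[OF x, of z] z rx by simp
    ultimately show ?thesis using l_def by simp
  qed
  have Ul: "U x = hscale l (V x)" for x
  proof (cases "x = 0")
    case True then show ?thesis using bU(1) bV(1) by simp
  next
    case False then show ?thesis using dfun[OF False] all[OF False] by simp
  qed
  have "norm (U x0) = cmod l * norm (V x0)" using Ul[of x0] by (simp add: norm_hscale)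
  then have "cmod l = 1" using bU(4) bV(4) x0 by simp
  then show ?thesis unfolding su_equiv_def using Ul by blast
qed


definition tp :: "'a::chilbert \<Rightarrow> 'a \<Rightarrow> real" where
  "tp x y = (cmod (hinner x y))\<^sup>2 / ((norm x)\<^sup>2 * (norm y)\<^sup>2)"

lemma ebar_ray_ray:
  fixes \<psi> \<phi> :: "'a::chilbert"
  assumes "\<psi> \<noteq> 0" "\<phi> \<noteq> 0"
  shows "ebar (ray \<psi>) (ray \<phi>) = tp \<phi> \<psi>"
proof -
  define u where "u = hscale (complex_of_real (1 / norm \<phi>)) \<phi>"
  have u: "norm u = 1" unfolding u_def by (rule unit_exists[OF assms(2)])
  have ru: "ray u = ray \<phi>" unfolding u_def using assms(2) by (simp add: ray_hscale)
  have "ebar (ray \<psi>) (ray \<phi>) = (cmod (hinner u \<psi>))\<^sup>2 / (norm \<psi>)\<^sup>2"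
    using ebar_ray_unit[OF assms(1) u] ru by simp
  also have "\<dots> = tp \<phi> \<psi>"
    using assms by (simp add: u_def tp_def hinner_hscale_left norm_mult norm_divide power_mult_distrib power_divide field_simps)
  finally show ?thesis .
qed

lemma tp_hscale:
  fixes x y :: "'a::chilbert"
  assumes "c \<noteq> 0" "d \<noteq> 0"
  shows "tp (hscale c x) (hscale d y) = tp x y"
  using assms by (simp add: tp_def hinner_hscale_left hinner_hscale_right norm_hscale norm_mult
      power_mult_distrib field_simps)

lemma tp_commute: "tp x (y::'a::chilbert) = tp y x"
  by (simp add: tp_def cmod_hinner_commute mult.commute)

lemma tp_unit: "norm x = 1 \<Longrightarrow> norm y = 1 \<Longrightarrow> tp x (y::'a::chilbert) = (cmod (hinner x y))\<^sup>2"
  by (simp add: tp_def)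

lemma tp_zero_iff: "x \<noteq> 0 \<Longrightarrow> y \<noteq> 0 \<Longrightarrow> tp x (y::'a::chilbert) = 0 \<longleftrightarrow> hinner x y = 0"
  by (simp add: tp_def)

locale fullctx =
  fixes fs :: "'a::chilbert set \<Rightarrow> 'b::chilbert set" and fu :: "'b set \<Rightarrow> 'a set"
  assumes bm: "bm_morph rays Lsub ebar rays Lsub ebar fs fu"
begin

lemma fs_rays: "r \<in> rays \<Longrightarrow> fs r \<in> rays"
  using bm by (auto simp: bm_morph_def chu_morph_def)

lemma fu_Lsub: "S \<in> Lsub \<Longrightarrow> fu S \<in> Lsub"
  using bm by (auto simp: bm_morph_def chu_morph_def)

lemma chu: "r \<in> rays \<Longrightarrow> S \<in> Lsub \<Longrightarrow> ebar r (fu S) = ebar (fs r) S"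
  using bm by (auto simp: bm_morph_def chu_morph_def)

lemma fs_inj: "r1 \<in> rays \<Longrightarrow> r2 \<in> rays \<Longrightarrow> fs r1 = fs r2 \<Longrightarrow> r1 = r2"
  using bm by (auto simp: bm_morph_def inj_on_def)

definition T :: "'a \<Rightarrow> 'b" where "T x = rep (fs (ray x))"

lemma T_props:
  assumes "x \<noteq> 0"
  shows "T x \<noteq> 0" "ray (T x) = fs (ray x)"
proof -
  have "fs (ray x) \<in> rays" using fs_rays ray_in_rays[OF assms] by blast
  then show "T x \<noteq> 0" "ray (T x) = fs (ray x)" using rep_props unfolding T_def by metis+
qed

lemma fs_ray_eq:
  assumes "x \<noteq> 0" "x' \<noteq> 0" "ray x' = fs (ray x)"
  shows "\<exists>c. c \<noteq> 0 \<and> x' = hscale c (T x)"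
  using assms T_props[OF assms(1)] ray_eq_iff by metis

lemma fu_fs:
  assumes r: "r \<in> rays"
  shows "fu (fs r) = r"
proof -
  have r': "fs r \<in> rays" using fs_rays[OF r] .
  have L': "fs r \<in> Lsub" using rays_Lsub[OF r'] .
  have F: "fu (fs r) \<in> Lsub" using fu_Lsub[OF L'] .
  have L: "r \<in> Lsub" using rays_Lsub[OF r] .
  have rr: "rep r \<noteq> 0" "r = ray (rep r)" using rep_props[OF r] by auto
  have rr': "rep (fs r) \<noteq> 0" "fs r = ray (rep (fs r))" using rep_props[OF r'] by auto
  have "ebar (fs r) (fs r) = 1" using ebar_one_iff_ray[OF rr'(1) L'] rr'(2) by simp
  then have "ebar r (fu (fs r)) = 1" using chu[OF r L'] by simp
  then have sub: "r \<subseteq> fu (fs r)" using ebar_one_iff_ray[OF rr(1) F] rr(2) by simp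
  have "fu (fs r) \<subseteq> r"
  proof
    fix x assume x: "x \<in> fu (fs r)"
    define x0 where "x0 = x - proj r x"
    have p: "proj r x \<in> r" using proj_props(1)[OF L] .
    have x0F: "x0 \<in> fu (fs r)" unfolding x0_def using F x sub p by (blast intro: Lsub_diff)
    show "x \<in> r"
    proof (cases "x0 = 0")
      case True then show ?thesis using p by (simp add: x0_def)
    next
      case False
      have "ebar (ray x0) (fu (fs r)) = 1" using ebar_one_iff[OF False F] x0F by simp
      then have "ebar (fs (ray x0)) (fs r) = 1" using chu[OF ray_in_rays[OF False] L'] by simp
      then have "ebar (ray (T x0)) (fs r) = 1" using T_props[OF False] by simp
      then have "ray (T x0) \<subseteq> fs r" using ebar_one_iff_ray[OF T_props(1)[OF False] L'] by simp
      then have "ray (T x0) = ray (rep (fs r))" using ray_subset_eq(1)[OF T_props(1)[OF False]] rr'(2) by metis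
      then have "fs (ray x0) = fs r" using T_props[OF False] rr'(2) by simp
      then have "ray x0 = r" using fs_inj ray_in_rays[OF False] r by blast
      then have x0r: "x0 \<in> r" using self_in_ray by blast
      have "hinner x0 (x - proj r x) = 0" using proj_props(2)[OF L x0r] .
      then have "x0 = 0" by (simp add: x0_def)
      then show ?thesis using False by simp
    qed
  qed
  then show ?thesis using sub by blast
qed

lemma tp_pres:
  assumes "x \<noteq> 0" "y \<noteq> 0" "x' \<noteq> 0" "y' \<noteq> 0" "ray x' = fs (ray x)" "ray y' = fs (ray y)"
  shows "tp x' y' = tp x y"
proof -
  have r: "ray x \<in> rays" "ray y \<in> rays" using assms ray_in_rays by auto
  have "ebar (ray y) (ray x) = ebar (ray y) (fu (fs (ray x)))" using fu_fs[OF r(1)] by simp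
  also have "\<dots> = ebar (fs (ray y)) (fs (ray x))" using chu[OF r(2) rays_Lsub[OF fs_rays[OF r(1)]]] .
  also have "\<dots> = ebar (ray y') (ray x')" using assms by simp
  finally show ?thesis using ebar_ray_ray assms by metis
qed

end


lemma ray_eq_coef_eq:
  fixes v w e' :: "'b::chilbert"
  assumes "ray v = ray w" "v \<noteq> 0" "hinner e' v = hinner e' w" "hinner e' w \<noteq> 0"
  shows "v = w"
proof -
  obtain c where c: "c \<noteq> 0" "v = hscale c w" using ray_eq_iff[OF assms(2)] assms(1) by blast
  have "hinner e' v = c * hinner e' w" using c(2) by (simp add: hinner_hscale_right)
  then have "c = 1" using assms(3,4) by simp
  then show ?thesis using c by simp
qed

locale fullctx2 = fullctx fs fu for fs :: "'a::chilbert set \<Rightarrow> 'b::chilbert set" and fu +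
  fixes e :: 'a and e' :: 'b
  assumes e: "norm e = 1" and e': "norm e' = 1" and ee: "ray e' = fs (ray e)"
begin

lemma e0: "e \<noteq> 0" using e by auto
lemma e'0: "e' \<noteq> 0" using e' by auto
lemma hee: "hinner e e = 1" using e by (simp add: hinner_norm)
lemma hee': "hinner e' e' = 1" using e' by (simp add: hinner_norm)

definition W :: "'a \<Rightarrow> 'b" where "W x = hscale (1 / hinner e' (T x)) (T x)"

lemma W_props:
  assumes x: "hinner e x = 1"
  shows "W x \<noteq> 0" "ray (W x) = fs (ray x)" "hinner e' (W x) = 1" "norm (W x) = norm x"
proof -
  have x0: "x \<noteq> 0" using x by auto
  note Tp = T_props[OF x0]
  have "tp e' (T x) = tp e x" using tp_pres[OF e0 x0 e'0 Tp(1) ee Tp(2)] .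
  also have "tp e x = 1 / (norm x)\<^sup>2" using e x by (simp add: tp_def)
  finally have "tp e' (T x) \<noteq> 0" using x0 by simp
  then have h: "hinner e' (T x) \<noteq> 0" using tp_zero_iff[OF e'0 Tp(1)] by simp
  then have c0: "1 / hinner e' (T x) \<noteq> 0" by simp
  show W0: "W x \<noteq> 0" unfolding W_def using c0 Tp(1) by (simp add: hscale_eq_zero_iff)
  show rW: "ray (W x) = fs (ray x)" unfolding W_def using ray_hscale[OF c0, of "T x"] Tp(2) by simp
  show hW: "hinner e' (W x) = 1" unfolding W_def using h by (simp add: hinner_hscale_right)
  have "tp e' (W x) = tp e x" using tp_pres[OF e0 x0 e'0 W0 ee rW] .
  then have "1 / (norm (W x))\<^sup>2 = 1 / (norm x)\<^sup>2" using e e' x hW by (simp add: tp_def)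
  then have "(norm (W x))\<^sup>2 = (norm x)\<^sup>2" by simp
  then show "norm (W x) = norm x" by (simp add: power2_eq_iff_nonneg)
qed

lemma W_e: "W e = e'"
proof (rule ray_eq_coef_eq[where e'=e'])
  show "ray (W e) = ray e'" using W_props(2)[OF hee] ee by simp
  show "W e \<noteq> 0" using W_props(1)[OF hee] .
  show "hinner e' (W e) = hinner e' e'" using W_props(3)[OF hee] hee' by simp
  show "hinner e' e' \<noteq> 0" using hee' by simp
qed

lemma W_cmod:
  assumes x: "hinner e x = 1" and y: "hinner e y = 1"
  shows "cmod (hinner (W x) (W y)) = cmod (hinner x y)"
proof -
  have x0: "x \<noteq> 0" and y0: "y \<noteq> 0" using x y by auto
  have "tp (W x) (W y) = tp x y"
    using tp_pres[OF x0 y0 W_props(1)[OF x] W_props(1)[OF y] W_props(2)[OF x] W_props(2)[OF y]] .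
  then have "(cmod (hinner (W x) (W y)))\<^sup>2 = (cmod (hinner x y))\<^sup>2"
    using W_props(4)[OF x] W_props(4)[OF y] x0 y0 by (simp add: tp_def)
  then show ?thesis by (simp add: power2_eq_iff_nonneg)
qed

definition E :: "'a set" where "E = {z. hinner e z = 0}"

definition G :: "'a \<Rightarrow> 'b" where "G z = W (z + e) - e'"

lemma E_D: "z \<in> E \<Longrightarrow> hinner e (z + e) = 1"
  by (simp add: E_def hinner_add_right hee)

lemma G_e': "z \<in> E \<Longrightarrow> hinner e' (G z) = 0"
  unfolding G_def using W_props(3)[OF E_D] hee' by (simp add: hinner_diff_right)

lemma e'_G: "z \<in> E \<Longrightarrow> hinner (G z) e' = 0"
  using G_e' hinner_commute[of "G z" e'] by simp

lemma e_E: "z \<in> E \<Longrightarrow> hinner z e = 0"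
  using hinner_commute[of z e] by (simp add: E_def)

lemma W_G: "z \<in> E \<Longrightarrow> W (z + e) = G z + e'"
  by (simp add: G_def)

lemma G_norm:
  assumes z: "z \<in> E"
  shows "norm (G z) = norm z"
proof -
  have "(norm (W (z + e)))\<^sup>2 = (norm (G z))\<^sup>2 + 1"
    using norm_add_sq[of "G z" e'] e'_G[OF z] e' W_G[OF z] by simp
  moreover have "(norm (z + e))\<^sup>2 = (norm z)\<^sup>2 + 1"
    using norm_add_sq[of z e] e_E[OF z] e by simp
  ultimately have "(norm (G z))\<^sup>2 = (norm z)\<^sup>2" using W_props(4)[OF E_D[OF z]] by simp
  then show ?thesis by (simp add: power2_eq_iff_nonneg)
qed

lemma G_zero: "G 0 = 0"
  unfolding G_def using W_e by simp

lemma zero_E: "0 \<in> E" by (simp add: E_def)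

lemma G_ray:
  assumes z: "z \<in> E" "z \<noteq> 0"
  shows "ray (G z) = fs (ray z)"
proof -
  note Tp = T_props[OF z(2)]
  define v where "v = T z"
  have v0: "v \<noteq> 0" using Tp(1) by (simp add: v_def)
  have "tp e' v = tp e z" using tp_pres[OF e0 z(2) e'0 v0 ee] Tp(2) by (simp add: v_def)
  also have "tp e z = 0" using z(1) by (simp add: tp_def E_def)
  finally have ev: "hinner e' v = 0" using tp_zero_iff[OF e'0 v0] by simp
  have zeD: "z + e \<noteq> 0" using E_D[OF z(1)] by auto
  have "tp (W (z + e)) v = tp (z + e) z"
    using tp_pres[OF zeD z(2) W_props(1)[OF E_D[OF z(1)]] v0 W_props(2)[OF E_D[OF z(1)]]] Tp(2)
    by (simp add: v_def)
  moreover have "hinner (W (z + e)) v = hinner (G z) v"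
    using ev W_G[OF z(1)] by (simp add: hinner_add_left hinner_commute[of e' v])
  moreover have "hinner (z + e) z = complex_of_real ((norm z)\<^sup>2)"
    using z(1) by (simp add: E_def hinner_add_left hinner_norm)
  moreover have "norm (W (z + e)) = norm (z + e)" using W_props(4)[OF E_D[OF z(1)]] .
  ultimately have "(cmod (hinner (G z) v))\<^sup>2 / ((norm (z + e))\<^sup>2 * (norm v)\<^sup>2)
      = ((norm z)\<^sup>2)\<^sup>2 / ((norm (z + e))\<^sup>2 * (norm z)\<^sup>2)"
    by (simp add: tp_def norm_power)
  then have "(cmod (hinner (G z) v))\<^sup>2 = (norm z)\<^sup>2 * (norm v)\<^sup>2"
    using zeD z(2) v0 by (simp add: field_simps power2_eq_square)
  then have "(cmod (hinner (G z) v))\<^sup>2 = (norm z * norm v)\<^sup>2" by (simp add: power_mult_distrib)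
  then have "cmod (hinner (G z) v) = norm z * norm v" by (simp add: power2_eq_iff_nonneg)
  then have cs: "cmod (hinner (G z) v) = norm (G z) * norm v" using G_norm[OF z(1)] by simp
  have Gz0: "G z \<noteq> 0" using G_norm[OF z(1)] z(2) by (metis norm_eq_zero)
  have vG: "v = hscale (hinner (G z) v / complex_of_real ((norm (G z))\<^sup>2)) (G z)"
    by (rule cauchy_schwarz_eq[OF Gz0 cs])
  then have "hinner (G z) v / complex_of_real ((norm (G z))\<^sup>2) \<noteq> 0" using v0 by auto
  then have "ray v = ray (G z)" using vG ray_hscale by metis
  then show ?thesis using Tp(2) by (simp add: v_def)
qed

end


lemma Re_from_cmod:
  assumes "cmod p = cmod q" "cmod (p - 1) = cmod (q - 1)"
  shows "Re p = Re q"
proof -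
  have a: "(Re p)\<^sup>2 + (Im p)\<^sup>2 = (Re q)\<^sup>2 + (Im q)\<^sup>2" using assms(1) by (metis cmod_power2)
  have b: "(Re p - 1)\<^sup>2 + (Im p)\<^sup>2 = (Re q - 1)\<^sup>2 + (Im q)\<^sup>2"
    using assms(2) cmod_power2[of "p - 1"] cmod_power2[of "q - 1"] by simp
  from a b show ?thesis by (simp add: power2_eq_square algebra_simps)
qed

context fullctx2 begin

lemma fu_span2:
  assumes f: "norm f = 1" "hinner e f = 0" and f': "norm f' = 1" "hinner e' f' = 0"
    and ff: "ray f' = fs (ray f)"
  shows "fu (span2 e' f') = span2 e f"
proof -
  have S: "span2 e f \<in> Lsub" using span2_Lsub[OF e f] .
  have S': "span2 e' f' \<in> Lsub" using span2_Lsub[OF e' f'] .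
  have f0: "f \<noteq> 0" and f'0: "f' \<noteq> 0" using f f' by auto
  have "ebar r (fu (span2 e' f')) = ebar r (span2 e f)" if r: "r \<in> rays" for r
  proof -
    have z: "rep r \<noteq> 0" "r = ray (rep r)" using rep_props[OF r] by auto
    define z where "z = rep r"
    have z0: "z \<noteq> 0" using z by (simp add: z_def)
    note Tp = T_props[OF z0]
    have "ebar r (fu (span2 e' f')) = ebar (fs (ray z)) (span2 e' f')"
      using chu[OF r S'] z by (simp add: z_def)
    also have "\<dots> = ebar (ray (T z)) (span2 e' f')" using Tp by simp
    also have "\<dots> = ((cmod (hinner e' (T z)))\<^sup>2 + (cmod (hinner f' (T z)))\<^sup>2) / (norm (T z))\<^sup>2"
      using ebar_vec[OF Tp(1) S'] norm_proj_span2[OF e' f'] by simp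
    also have "\<dots> = tp e' (T z) + tp f' (T z)" using e' f' by (simp add: tp_def add_divide_distrib)
    also have "tp e' (T z) = tp e z" using tp_pres[OF e0 z0 e'0 Tp(1) ee Tp(2)] .
    also have "tp f' (T z) = tp f z" using tp_pres[OF f0 z0 f'0 Tp(1) ff Tp(2)] .
    also have "tp e z + tp f z = ((cmod (hinner e z))\<^sup>2 + (cmod (hinner f z))\<^sup>2) / (norm z)\<^sup>2"
      using e f by (simp add: tp_def add_divide_distrib)
    also have "\<dots> = ebar (ray z) (span2 e f)"
      using ebar_vec[OF z0 S] norm_proj_span2[OF e f] by simp
    finally show ?thesis using z by (simp add: z_def)
  qed
  then show ?thesis using part_objects fu_Lsub[OF S'] S
    unfolding biextensional_chu_def extensional_chu_def by blast
qed

lemma W_Re: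
  assumes x: "hinner e x = 1" and y: "hinner e y = 1"
  shows "Re (hinner (W x) (W y)) = Re (hinner x y)"
proof -
  define x0 where "x0 = x - e"
  have x0E: "x0 \<in> E" using x hee by (simp add: x0_def E_def hinner_diff_right)
  have xx0: "x = x0 + e" by (simp add: x0_def)
  have Wx: "W x = G x0 + e'" using W_G[OF x0E] xx0 by simp
  show ?thesis
  proof (cases "x0 = 0")
    case True
    then have "x = e" by (simp add: x0_def)
    then show ?thesis using W_e W_props(3)[OF y] y by simp
  next
    case False
    define n where "n = norm x0"
    have n: "n > 0" using False by (simp add: n_def)
    define f where "f = hscale (complex_of_real (1 / n)) x0"
    define f' where "f' = hscale (complex_of_real (1 / n)) (G x0)"
    have c0: "complex_of_real (1 / n) \<noteq> 0" using n by simp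
    have fn: "norm f = 1" using n by (simp add: f_def norm_hscale n_def norm_divide)
    have f'n: "norm f' = 1" using n G_norm[OF x0E] by (simp add: f'_def norm_hscale n_def norm_divide)
    have ef: "hinner e f = 0" using x0E by (simp add: f_def E_def hinner_hscale_right)
    have ef': "hinner e' f' = 0" using G_e'[OF x0E] by (simp add: f'_def hinner_hscale_right)
    have Gx00: "G x0 \<noteq> 0" using G_norm[OF x0E] False by (metis norm_eq_zero)
    have rf: "ray f = ray x0" unfolding f_def by (rule ray_hscale[OF c0])
    have rf': "ray f' = ray (G x0)" unfolding f'_def by (rule ray_hscale[OF c0])
    have ff: "ray f' = fs (ray f)" using rf rf' G_ray[OF x0E False] by simp
    have FU: "fu (span2 e' f') = span2 e f" by (rule fu_span2[OF fn ef f'n ef' ff])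
    have S: "span2 e f \<in> Lsub" using span2_Lsub[OF e fn ef] .
    have S': "span2 e' f' \<in> Lsub" using span2_Lsub[OF e' f'n ef'] .
    have y0: "y \<noteq> 0" using y by auto
    note Wy = W_props[OF y]
    have "ebar (ray y) (span2 e f) = ebar (ray (W y)) (span2 e' f')"
      using chu[OF ray_in_rays[OF y0] S'] FU Wy(2) by simp
    then have "((cmod (hinner e y))\<^sup>2 + (cmod (hinner f y))\<^sup>2) / (norm y)\<^sup>2
        = ((cmod (hinner e' (W y)))\<^sup>2 + (cmod (hinner f' (W y)))\<^sup>2) / (norm (W y))\<^sup>2"
      using ebar_vec[OF y0 S] ebar_vec[OF Wy(1) S'] norm_proj_span2[OF e fn ef]
        norm_proj_span2[OF e' f'n ef'] by simp
    then have "(cmod (hinner f y))\<^sup>2 = (cmod (hinner f' (W y)))\<^sup>2"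
      using y Wy(3) Wy(4) y0 by simp
    then have "cmod (hinner f y) = cmod (hinner f' (W y))" by (simp add: power2_eq_iff_nonneg)
    then have "cmod (hinner x0 y) = cmod (hinner (G x0) (W y))"
      using n by (simp add: f_def f'_def hinner_hscale_left norm_mult norm_divide)
    moreover have "hinner x0 y = hinner x y - 1" using y by (simp add: x0_def hinner_diff_left)
    moreover have "hinner (G x0) (W y) = hinner (W x) (W y) - 1"
      using Wx Wy(3) by (simp add: hinner_add_left)
    ultimately have "cmod (hinner (W x) (W y) - 1) = cmod (hinner x y - 1)" by simp
    then show ?thesis using Re_from_cmod W_cmod[OF x y] by metis
  qed
qed

end


lemma hinner_scaleR_left: "hinner (scaleR a p) q = complex_of_real a * hinner p (q::'a::chilbert)"
  by (simp add: scaleR_hscale hinner_hscale_left)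

lemma hinner_scaleR_right: "hinner p (scaleR a q) = complex_of_real a * hinner p (q::'a::chilbert)"
  by (simp add: scaleR_hscale hinner_hscale_right)

lemma nsq3:
  fixes u p q :: "'a::chilbert"
  shows "(norm (u - (scaleR a p + scaleR b q)))\<^sup>2 = (norm u)\<^sup>2 + a\<^sup>2 * (norm p)\<^sup>2 + b\<^sup>2 * (norm q)\<^sup>2
     - 2 * a * Re (hinner u p) - 2 * b * Re (hinner u q) + 2 * a * b * Re (hinner p q)"
proof -
  have "(norm (scaleR a p + scaleR b q))\<^sup>2 = a\<^sup>2 * (norm p)\<^sup>2 + b\<^sup>2 * (norm q)\<^sup>2 + 2 * a * b * Re (hinner p q)"
    by (simp add: norm_add_sq hinner_scaleR_left hinner_scaleR_right power_mult_distrib)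
  moreover have "Re (hinner u (scaleR a p + scaleR b q)) = a * Re (hinner u p) + b * Re (hinner u q)"
    by (simp add: hinner_add_right hinner_scaleR_right)
  ultimately show ?thesis by (simp add: norm_diff_sq algebra_simps)
qed

lemma hscale_decomp: "hscale c (z::'a::chilbert) = scaleR (Re c) z + scaleR (Im c) (hscale \<i> z)"
proof -
  have "hscale c z = hscale (complex_of_real (Re c) + complex_of_real (Im c) * \<i>) z"
    by (rule arg_cong[where f="\<lambda>c. hscale c z"]) (simp add: complex_eq_iff)
  also have "\<dots> = scaleR (Re c) z + scaleR (Im c) (hscale \<i> z)"
    by (simp add: hscale_add_left scaleR_hscale hscale_hscale)
  finally show ?thesis .
qed

context fullctx2 begin

lemma E_add: "z \<in> E \<Longrightarrow> y \<in> E \<Longrightarrow> z + y \<in> E" by (simp add: E_def hinner_add_right)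
lemma E_hscale: "z \<in> E \<Longrightarrow> hscale c z \<in> E" by (simp add: E_def hinner_hscale_right)
lemma E_scaleR: "z \<in> E \<Longrightarrow> scaleR c z \<in> E" by (simp add: E_def hinner_scaleR_right)
lemma E_diff: "z \<in> E \<Longrightarrow> y \<in> E \<Longrightarrow> z - y \<in> E" by (simp add: E_def hinner_diff_right)

lemma G_Re:
  assumes z: "z \<in> E" and y: "y \<in> E"
  shows "Re (hinner (G z) (G y)) = Re (hinner z y)"
proof -
  have "Re (hinner (W (z + e)) (W (y + e))) = Re (hinner (z + e) (y + e))"
    by (rule W_Re[OF E_D[OF z] E_D[OF y]])
  moreover have "hinner (W (z + e)) (W (y + e)) = hinner (G z) (G y) + 1"
    using W_G[OF z] W_G[OF y] G_e'[OF y] e'_G[OF z] hee' by (simp add: hinner_add_left hinner_add_right)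
  moreover have "hinner (z + e) (y + e) = hinner z y + 1"
    using e_E[OF z] y hee by (simp add: E_def hinner_add_left hinner_add_right)
  ultimately show ?thesis by simp
qed

lemma G_lin:
  assumes z: "z \<in> E" and y: "y \<in> E"
  shows "G (scaleR a z + scaleR b y) = scaleR a (G z) + scaleR b (G y)"
proof -
  define w where "w = scaleR a z + scaleR b y"
  have w: "w \<in> E" using z y by (simp add: w_def E_add E_scaleR)
  have "(norm (G w - (scaleR a (G z) + scaleR b (G y))))\<^sup>2 = (norm (w - (scaleR a z + scaleR b y)))\<^sup>2"
    unfolding nsq3 G_norm[OF w] G_norm[OF z] G_norm[OF y] G_Re[OF w z] G_Re[OF w y] G_Re[OF z y] ..
  also have "\<dots> = 0" by (simp add: w_def)
  finally show ?thesis by (simp add: w_def)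
qed

lemma G_add: "z \<in> E \<Longrightarrow> y \<in> E \<Longrightarrow> G (z + y) = G z + G y"
  using G_lin[of z y 1 1] by simp

lemma G_scaleR: "z \<in> E \<Longrightarrow> G (scaleR a z) = scaleR a (G z)"
  using G_lin[of z z a 0] by simp

lemma G_i:
  assumes z: "z \<in> E"
  shows "G (hscale \<i> z) = hscale \<i> (G z) \<or> G (hscale \<i> z) = hscale (- \<i>) (G z)"
proof (cases "z = 0")
  case True then show ?thesis using G_zero by simp
next
  case False
  have iz: "hscale \<i> z \<in> E" using E_hscale[OF z] .
  define r where "r = (norm z)\<^sup>2"
  have r: "r > 0" using False by (simp add: r_def)
  define q where "q = hinner (G z) (G (hscale \<i> z))"
  have Req: "Re q = 0" unfolding q_def G_Re[OF z iz] by (simp add: hinner_hscale_right hinner_norm)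
  have "cmod (hinner (W (z + e)) (W (hscale \<i> z + e))) = cmod (hinner (z + e) (hscale \<i> z + e))"
    by (rule W_cmod[OF E_D[OF z] E_D[OF iz]])
  moreover have "hinner (W (z + e)) (W (hscale \<i> z + e)) = q + 1"
    using W_G[OF z] W_G[OF iz] G_e'[OF iz] e'_G[OF z] hee'
    by (simp add: q_def hinner_add_left hinner_add_right)
  moreover have "hinner (z + e) (hscale \<i> z + e) = \<i> * complex_of_real r + 1"
    using e_E[OF z] z hee by (simp add: E_def hinner_add_left hinner_add_right hinner_hscale_right
        hinner_hscale_left hinner_norm r_def)
  ultimately have "cmod (q + 1) = cmod (\<i> * complex_of_real r + 1)" by simp
  then have "(cmod (q + 1))\<^sup>2 = (cmod (\<i> * complex_of_real r + 1))\<^sup>2" by simp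
  then have "(Im q)\<^sup>2 = r\<^sup>2" using Req by (simp add: cmod_power2)
  then have Imq: "Im q = r \<or> Im q = - r" by (simp add: power2_eq_iff)
  have cmq: "cmod q = r" using Imq Req r by (auto simp: cmod_def)
  have Gz0: "G z \<noteq> 0" using G_norm[OF z] False by (metis norm_eq_zero)
  have nG: "(norm (G z))\<^sup>2 = r" using G_norm[OF z] by (simp add: r_def)
  have "cmod (hinner (G z) (G (hscale \<i> z))) = norm (G z) * norm (G (hscale \<i> z))"
    using cmq G_norm[OF z] G_norm[OF iz] by (simp add: q_def norm_hscale r_def power2_eq_square)
  from cauchy_schwarz_eq[OF Gz0 this]
  have Gi: "G (hscale \<i> z) = hscale (q / complex_of_real r) (G z)" using nG by (simp add: q_def)
  have qr: "q = \<i> * complex_of_real (Im q)" using Req by (simp add: complex_eq_iff)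
  from Imq have "q / complex_of_real r = \<i> \<or> q / complex_of_real r = - \<i>"
  proof
    assume "Im q = r" then have "q = \<i> * complex_of_real r" using qr by simp
    then show ?thesis using r by simp
  next
    assume "Im q = - r" then have "q = - \<i> * complex_of_real r" using qr by simp
    then show ?thesis using r by simp
  qed
  then show ?thesis using Gi by auto
qed

lemma G_sign:
  "(\<forall>z\<in>E. G (hscale \<i> z) = hscale \<i> (G z)) \<or> (\<forall>z\<in>E. G (hscale \<i> z) = hscale (- \<i>) (G z))"
proof (rule ccontr)
  assume "\<not> ?thesis"
  then obtain z y where z: "z \<in> E" "G (hscale \<i> z) \<noteq> hscale \<i> (G z)"
    and y: "y \<in> E" "G (hscale \<i> y) \<noteq> hscale (- \<i>) (G y)" by blast
  have z1: "G (hscale \<i> z) = hscale (- \<i>) (G z)" using G_i[OF z(1)] z(2) by blast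
  have y1: "G (hscale \<i> y) = hscale \<i> (G y)" using G_i[OF y(1)] y(2) by blast
  have zy: "z + y \<in> E" using E_add[OF z(1) y(1)] .
  have sum: "G (hscale \<i> (z + y)) = hscale (- \<i>) (G z) + hscale \<i> (G y)"
    using G_add[OF E_hscale[OF z(1)] E_hscale[OF y(1)]] z1 y1 by (simp add: hscale_add_right)
  have Gzy: "G (z + y) = G z + G y" using G_add[OF z(1) y(1)] .
  show False
    using G_i[OF zy]
  proof
    assume "G (hscale \<i> (z + y)) = hscale \<i> (G (z + y))"
    then have "hscale \<i> (G z) - hscale (- \<i>) (G z) = 0" using sum Gzy by (simp add: hscale_add_right)
    then have "hscale (2 * \<i>) (G z) = 0" by (simp add: hscale_diff_left[symmetric])
    then have "G z = 0" by (simp add: hscale_eq_zero_iff)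
    then show False using z(2) z1 by simp
  next
    assume "G (hscale \<i> (z + y)) = hscale (- \<i>) (G (z + y))"
    then have "hscale \<i> (G y) - hscale (- \<i>) (G y) = 0" using sum Gzy by (simp add: hscale_add_right)
    then have "hscale (2 * \<i>) (G y) = 0" by (simp add: hscale_diff_left[symmetric])
    then have "G y = 0" by (simp add: hscale_eq_zero_iff)
    then show False using y(2) y1 by simp
  qed
qed

definition sg :: "complex \<Rightarrow> complex" where
  "sg = (if (\<forall>z\<in>E. G (hscale \<i> z) = hscale \<i> (G z)) then id else cnj)"

lemma sg_isig: "isig sg" by (simp add: sg_def isig_def)

lemma G_i_sg: "z \<in> E \<Longrightarrow> G (hscale \<i> z) = hscale (sg \<i>) (G z)"
  using G_sign by (auto simp: sg_def)

lemma G_hscale: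
  assumes z: "z \<in> E"
  shows "G (hscale c z) = hscale (sg c) (G z)"
proof -
  have "G (hscale c z) = scaleR (Re c) (G z) + scaleR (Im c) (G (hscale \<i> z))"
    unfolding hscale_decomp[of c z] by (rule G_lin[OF z E_hscale[OF z]])
  also have "\<dots> = hscale (complex_of_real (Re c) + complex_of_real (Im c) * sg \<i>) (G z)"
    unfolding G_i_sg[OF z] by (simp add: scaleR_hscale hscale_hscale hscale_add_left)
  also have "complex_of_real (Re c) + complex_of_real (Im c) * sg \<i> = sg c"
    by (auto simp: sg_def complex_eq_iff)
  finally show ?thesis .
qed

lemma G_inner:
  assumes z: "z \<in> E" and y: "y \<in> E"
  shows "hinner (G z) (G y) = sg (hinner z y)"
proof -
  define p where "p = hinner z y"
  define q where "q = hinner (G z) (G y)"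
  have Re: "Re q = Re p" using G_Re[OF z y] by (simp add: p_def q_def)
  have "Re (hinner (G z) (G (hscale \<i> y))) = Re (hinner z (hscale \<i> y))"
    by (rule G_Re[OF z E_hscale[OF y]])
  then have Im: "Re (sg \<i> * q) = Re (\<i> * p)"
    by (simp add: G_hscale[OF y] hinner_hscale_right p_def q_def)
  show ?thesis
  proof (cases "sg = id")
    case True
    then have "Im q = Im p" using Im by simp
    then show ?thesis using Re True by (simp add: complex_eq_iff p_def q_def)
  next
    case False
    then have "sg = cnj" by (auto simp: sg_def)
    then show ?thesis using Re Im by (simp add: complex_eq_iff p_def q_def)
  qed
qed

end


context fullctx2 begin

definition P0 :: "'a \<Rightarrow> 'a" where "P0 x = x - hscale (hinner e x) e"

lemma P0_E: "P0 x \<in> E"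
  by (simp add: P0_def E_def hinner_diff_right hinner_hscale_right hee)

lemma P0_add: "P0 (x + y) = P0 x + P0 y"
  by (simp add: P0_def hinner_add_right hscale_add_left algebra_simps)

lemma P0_hscale: "P0 (hscale c x) = hscale c (P0 x)"
  by (simp add: P0_def hinner_hscale_right hscale_diff_right hscale_hscale)

lemma x_decomp: "x = P0 x + hscale (hinner e x) e"
  by (simp add: P0_def)

definition Uf :: "'a \<Rightarrow> 'b" where "Uf x = G (P0 x) + hscale (sg (hinner e x)) e'"

lemma Uf_add: "Uf (x + y) = Uf x + Uf y"
  unfolding Uf_def P0_add G_add[OF P0_E P0_E]
  by (simp add: hinner_add_right isig_props(1)[OF sg_isig] hscale_add_left algebra_simps)

lemma Uf_hscale: "Uf (hscale c x) = hscale (sg c) (Uf x)"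
  unfolding Uf_def P0_hscale G_hscale[OF P0_E]
  by (simp add: hinner_hscale_right isig_props(3)[OF sg_isig] hscale_add_right hscale_hscale)

lemma Uf_inner: "hinner (Uf x) (Uf y) = sg (hinner x y)"
proof -
  define a where "a = hinner e x"
  define b where "b = hinner e y"
  have P0e: "hinner (P0 z) e = 0" for z using e_E[OF P0_E] .
  have eP0: "hinner e (P0 z) = 0" for z using P0_E[of z] by (simp add: E_def)
  have "hinner x y = hinner (P0 x + hscale a e) (P0 y + hscale b e)"
    using x_decomp[of x] x_decomp[of y] by (simp add: a_def b_def)
  also have "\<dots> = hinner (P0 x) (P0 y) + cnj a * b"
    using P0e eP0 hee by (simp add: hinner_add_left hinner_add_right hinner_hscale_left hinner_hscale_right)
  finally have xy: "hinner x y = hinner (P0 x) (P0 y) + cnj a * b" .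
  have "hinner (Uf x) (Uf y) = hinner (G (P0 x)) (G (P0 y)) + cnj (sg a) * sg b"
    unfolding Uf_def a_def[symmetric] b_def[symmetric]
    using G_e'[OF P0_E] e'_G[OF P0_E] hee'
    by (simp add: hinner_add_left hinner_add_right hinner_hscale_left hinner_hscale_right)
  also have "\<dots> = sg (hinner x y)"
    unfolding xy G_inner[OF P0_E P0_E] using sg_isig by (simp add: isig_props)
  finally show ?thesis .
qed

lemma Uf_norm: "norm (Uf x) = norm x"
proof -
  have "complex_of_real ((norm (Uf x))\<^sup>2) = complex_of_real ((norm x)\<^sup>2)"
    using Uf_inner[of x x] isig_props(4)[OF sg_isig] by (simp add: hinner_norm del: of_real_power)
  then have "(norm (Uf x))\<^sup>2 = (norm x)\<^sup>2" using of_real_eq_iff by blast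
  then show ?thesis by (simp add: power2_eq_iff_nonneg)
qed

lemma Uf_zero: "Uf 0 = 0"
  using Uf_add[of 0 0] by simp

lemma Uf_diff: "Uf (x - y) = Uf x - Uf y"
  using Uf_add[of "x - y" y] by (simp add: eq_diff_eq)

lemma Uf_E: "z \<in> E \<Longrightarrow> Uf z = G z"
  by (simp add: Uf_def P0_def E_def isig_props(5)[OF sg_isig])

lemma Uf_D:
  assumes y: "hinner e y = 1"
  shows "Uf y = W y"
proof -
  have "P0 y = y - e" using y by (simp add: P0_def)
  moreover have "G (y - e) = W y - e'" by (simp add: G_def)
  ultimately show ?thesis using y by (simp add: Uf_def isig_props(6)[OF sg_isig])
qed

lemma Uf_ray:
  assumes x: "x \<noteq> 0"
  shows "ray (Uf x) = fs (ray x)"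
proof (cases "hinner e x = 0")
  case True
  then have xE: "x \<in> E" by (simp add: E_def)
  then show ?thesis using Uf_E G_ray[OF xE x] by simp
next
  case False
  define a where "a = hinner e x"
  have a0: "a \<noteq> 0" using False by (simp add: a_def)
  define y where "y = hscale (1 / a) x"
  have y: "hinner e y = 1" using a0 by (simp add: y_def hinner_hscale_right a_def)
  have xy: "x = hscale a y" using a0 by (simp add: y_def hscale_hscale)
  have ry: "ray y = ray x" unfolding y_def using a0 by (simp add: ray_hscale)
  have "Uf x = hscale (sg a) (W y)" using xy Uf_hscale Uf_D[OF y] by simp
  moreover have "sg a \<noteq> 0" using a0 isig_props(7)[OF sg_isig] by simp
  ultimately have "ray (Uf x) = ray (W y)" using ray_hscale by simp
  then show ?thesis using W_props(2)[OF y] ry by simp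
qed

lemma Uf_inj: "Uf x = Uf y \<Longrightarrow> x = y"
  using Uf_diff[of x y] Uf_norm[of "x - y"] by simp

lemma Uf_hscale_inv: "hscale k (Uf x) = Uf (hscale (sg k) x)"
  using Uf_hscale isig_props(9)[OF sg_isig] by simp

lemma Uf_alt:
  assumes v: "v \<noteq> 0"
  shows "(\<exists>x. Uf x = v) \<or> (\<forall>x. hinner v (Uf x) = 0)"
proof -
  have Lv: "ray v \<in> Lsub" using ray_Lsub[OF v] .
  define F where "F = fu (ray v)"
  have F: "F \<in> Lsub" unfolding F_def using fu_Lsub[OF Lv] .
  have key: "ebar (ray x) F = ebar (ray (Uf x)) (ray v)" if x: "x \<noteq> 0" for x
    unfolding F_def using chu[OF ray_in_rays[OF x] Lv] Uf_ray[OF x] by simp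
  have Ux0: "Uf x \<noteq> 0" if "x \<noteq> 0" for x using Uf_norm[of x] that by (metis norm_eq_zero)
  show ?thesis
  proof (cases "\<exists>x\<in>F. x \<noteq> 0")
    case True
    then obtain x where x: "x \<in> F" "x \<noteq> 0" by blast
    have "ebar (ray x) F = 1" using ebar_one_iff[OF x(2) F] x(1) by simp
    then have "ebar (ray (Uf x)) (ray v) = 1" using key[OF x(2)] by simp
    then have "ray (Uf x) \<subseteq> ray v" using ebar_one_iff_ray[OF Ux0[OF x(2)] Lv] by simp
    then obtain c where c: "c \<noteq> 0" "Uf x = hscale c v" using ray_subset_eq(2)[OF Ux0[OF x(2)]] by blast
    then have "v = hscale (1 / c) (Uf x)" by (simp add: hscale_hscale)
    then have "v = Uf (hscale (sg (1 / c)) x)" using Uf_hscale_inv by simp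
    then show ?thesis by blast
  next
    case False
    then have F0: "\<And>y. y \<in> F \<Longrightarrow> y = 0" by blast
    have "hinner v (Uf x) = 0" for x
    proof (cases "x = 0")
      case True then show ?thesis using Uf_zero by simp
    next
      case False
      have "proj F x = 0" using F0 proj_props(1)[OF F] by blast
      then have "ebar (ray x) F = 0" using ebar_vec[OF False F] by simp
      then have "ebar (ray (Uf x)) (ray v) = 0" using key[OF False] by simp
      then have "tp v (Uf x) = 0" using ebar_ray_ray[OF Ux0[OF False] v] by simp
      then show ?thesis using tp_zero_iff[OF v Ux0[OF False]] by simp
    qed
    then show ?thesis by blast
  qed
qed

lemma Uf_surj: "\<exists>x. Uf x = v"
proof (rule ccontr)
  assume nv: "\<not> (\<exists>x. Uf x = v)"
  then have v0: "v \<noteq> 0" using Uf_zero by auto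
  have ov: "\<forall>x. hinner v (Uf x) = 0" using Uf_alt[OF v0] nv by blast
  define w where "w = v + Uf e"
  have w0: "w \<noteq> 0"
  proof
    assume "w = 0"
    moreover have "Uf (- e) + Uf e = 0" using Uf_add[of "- e" e] Uf_zero by simp
    ultimately have "v = Uf (- e)" by (metis w_def add_right_cancel)
    then show False using nv by blast
  qed
  show False using Uf_alt[OF w0]
  proof
    assume "\<exists>x. Uf x = w"
    then obtain x where "Uf x = w" by blast
    then have "v = Uf (x - e)" using Uf_diff by (simp add: w_def)
    then show False using nv by blast
  next
    assume "\<forall>x. hinner w (Uf x) = 0"
    then have "hinner w (Uf e) = 0" by blast
    moreover have "hinner w (Uf e) = 1"
      using ov Uf_norm[of e] e by (simp add: w_def hinner_add_left hinner_norm)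
    ultimately show False by simp
  qed
qed

lemma Uf_semiunitary: "semiunitary Uf"
proof -
  have "bij Uf" unfolding bij_def inj_def surj_def using Uf_inj Uf_surj by metis
  moreover have "sg \<in> {id, cnj}" using sg_isig by (simp add: isig_def)
  ultimately show ?thesis unfolding semiunitary_def using Uf_add Uf_hscale Uf_inner by blast
qed

lemma Uf_chu_eq: "chu_eq rays Lsub (PU Uf) (vimage Uf) fs fu"
proof -
  have A: "PU Uf r = fs r" if r: "r \<in> rays" for r
    unfolding PU_def using Uf_ray[OF rep_props(1)[OF r]] ray_rep[OF r] by simp
  have B: "Uf -` S = fu S" if S: "S \<in> Lsub" for S
  proof -
    have "x \<in> fu S \<longleftrightarrow> Uf x \<in> S" for x
    proof (cases "x = 0")
      case True then show ?thesis using Lsub_zero[OF S] Lsub_zero[OF fu_Lsub[OF S]] Uf_zero by simp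
    next
      case False
      have Ux0: "Uf x \<noteq> 0" using Uf_norm[of x] False by (metis norm_eq_zero)
      have "x \<in> fu S \<longleftrightarrow> ebar (ray x) (fu S) = 1" using ebar_one_iff[OF False fu_Lsub[OF S]] by simp
      also have "\<dots> \<longleftrightarrow> ebar (ray (Uf x)) S = 1"
        using chu[OF ray_in_rays[OF False] S] Uf_ray[OF False] by simp
      also have "\<dots> \<longleftrightarrow> Uf x \<in> S" using ebar_one_iff[OF Ux0 S] .
      finally show ?thesis .
    qed
    then show ?thesis by auto
  qed
  show ?thesis unfolding chu_eq_def using A B by auto
qed

end

theorem part_full:
  fixes fs :: "'a::chilbert set \<Rightarrow> 'b::chilbert set" and fu :: "'b set \<Rightarrow> 'a set"
  assumes dim: "dim_gt2 TYPE('a)" and bm: "bm_morph rays Lsub ebar rays Lsub ebar fs fu"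
  shows "\<exists>U :: 'a \<Rightarrow> 'b. semiunitary U \<and> chu_eq rays Lsub (PU U) (vimage U) fs fu"
proof -
  interpret fullctx fs fu by (rule fullctx.intro[OF bm])
  obtain x0 :: 'a where x0: "x0 \<noteq> 0" using dim_gt2_nonzero[OF dim] by blast
  define e where "e = hscale (complex_of_real (1 / norm x0)) x0"
  have e: "norm e = 1" unfolding e_def by (rule unit_exists[OF x0])
  have e0: "e \<noteq> 0" using e by auto
  define e' where "e' = hscale (complex_of_real (1 / norm (T e))) (T e)"
  have e': "norm e' = 1" unfolding e'_def by (rule unit_exists[OF T_props(1)[OF e0]])
  have ee: "ray e' = fs (ray e)" unfolding e'_def using T_props[OF e0] by (simp add: ray_hscale)
  have "fullctx2 fs fu e e'"
    unfolding fullctx2_def fullctx2_axioms_def fullctx_def using bm e e' ee by blast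
  then interpret fullctx2 fs fu e e' .
  show ?thesis using Uf_semiunitary Uf_chu_eq by blast
qed


theorem theorem3p15:
  assumes "dim_gt2 TYPE('a::chilbert)"
    and "dim_gt2 TYPE('b::chilbert)"
    and "dim_gt2 TYPE('c::chilbert)"
  shows "
    \<comment> \<open>PR on objects lands in bmChu: biextensional Chu spaces over [0,1]\<close>
    (chu_space01 (rays :: 'a set set) Lsub ebar \<and> biextensional_chu (rays :: 'a set set) Lsub ebar)
  \<and>
    \<comment> \<open>PR on morphisms lands in bmChu\<close>
    (\<forall>U :: 'a \<Rightarrow> 'b. semiunitary U \<longrightarrow> bm_morph rays Lsub ebar rays Lsub ebar (PU U) (vimage U))
  \<and>
    \<comment> \<open>independent of the representative of [U]\<close>
    (\<forall>U V :: 'a \<Rightarrow> 'b. semiunitary U \<and> semiunitary V \<and> su_equiv U V \<longrightarrow>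
        chu_eq rays Lsub (PU U) (vimage U) (PU V) (vimage V))
  \<and>
    \<comment> \<open>preserves identities\<close>
    (chu_eq (rays :: 'a set set) Lsub (PU (id :: 'a \<Rightarrow> 'a)) (vimage id) id id)
  \<and>
    \<comment> \<open>preserves composition\<close>
    (\<forall>(U :: 'a \<Rightarrow> 'b) (V :: 'b \<Rightarrow> 'c). semiunitary U \<and> semiunitary V \<longrightarrow>
        chu_eq rays Lsub (PU (V \<circ> U)) (vimage (V \<circ> U)) (PU V \<circ> PU U) (vimage U \<circ> vimage V))
  \<and>
    \<comment> \<open>faithful\<close>
    (\<forall>U V :: 'a \<Rightarrow> 'b. semiunitary U \<and> semiunitary V \<and>
        chu_eq rays Lsub (PU U) (vimage U) (PU V) (vimage V) \<longrightarrow> su_equiv U V)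
  \<and>
    \<comment> \<open>full\<close>
    (\<forall>(fs :: 'a set \<Rightarrow> 'b set) (fu :: 'b set \<Rightarrow> 'a set).
        bm_morph rays Lsub ebar rays Lsub ebar fs fu \<longrightarrow>
        (\<exists>U :: 'a \<Rightarrow> 'b. semiunitary U \<and> chu_eq rays Lsub (PU U) (vimage U) fs fu))"
proof -
  have c1: "chu_space01 (rays :: 'a set set) Lsub ebar \<and> biextensional_chu (rays :: 'a set set) Lsub ebar"
    by (rule part_objects)
  have c2: "\<forall>U :: 'a \<Rightarrow> 'b. semiunitary U \<longrightarrow> bm_morph rays Lsub ebar rays Lsub ebar (PU U) (vimage U)"
    using su_bm_morph by blast
  have c3: "\<forall>U V :: 'a \<Rightarrow> 'b. semiunitary U \<and> semiunitary V \<and> su_equiv U V \<longrightarrow>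
        chu_eq rays Lsub (PU U) (vimage U) (PU V) (vimage V)"
    using part_equiv by blast
  have c4: "chu_eq (rays :: 'a set set) Lsub (PU (id :: 'a \<Rightarrow> 'a)) (vimage id) id id"
    by (rule part_id)
  have c5: "\<forall>(U :: 'a \<Rightarrow> 'b) (V :: 'b \<Rightarrow> 'c). semiunitary U \<and> semiunitary V \<longrightarrow>
        chu_eq rays Lsub (PU (V \<circ> U)) (vimage (V \<circ> U)) (PU V \<circ> PU U) (vimage U \<circ> vimage V)"
    using part_comp by blast
  have c6: "\<forall>U V :: 'a \<Rightarrow> 'b. semiunitary U \<and> semiunitary V \<and>
        chu_eq rays Lsub (PU U) (vimage U) (PU V) (vimage V) \<longrightarrow> su_equiv U V"
    using part_faithful[OF assms(1)] by blast
  have c7: "\<forall>(fs :: 'a set \<Rightarrow> 'b set) (fu :: 'b set \<Rightarrow> 'a set).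
        bm_morph rays Lsub ebar rays Lsub ebar fs fu \<longrightarrow>
        (\<exists>U :: 'a \<Rightarrow> 'b. semiunitary U \<and> chu_eq rays Lsub (PU U) (vimage U) fs fu)"
    using part_full[OF assms(1)] by blast
  show ?thesis using c1 c2 c3 c4 c5 c6 c7 by blast
qed

end
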